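(* Let $\mathbf A\in\mathbb C^{m\times n}$, $\mathbf W\in\mathbb C^{n\times m}$, $k=\max\{\operatorname{Ind}(\mathbf A\mathbf W),\operatorname{Ind}(\mathbf W\mathbf A)\}$ and $\operatorname{rank}(\mathbf A\mathbf W)^{k}=r$. Then the $\mathbf W$-weighted Drazin inverse $\mathbf A_{d,W}=(a^{d,W}_{ij})\in\mathbb C^{m\times n}$ satisfies, for all $i=1,\dots,m$ and $j=1,\dots,n$, \[ a^{d,W}_{ij}=\frac{\sum_{\beta\in J_{r,m}\{i\}}\left|\left((\mathbf A\mathbf W)^{k+2}_{.i}(\bar{\mathbf v}^{(k)}_{.j})\right)^{\beta}_{\beta}\right|}{\sum_{\beta\in J_{r,m}}\left|((\mathbf A\mathbf W)^{k+2})^{\beta}_{\beta}\right|} \] and \[ a^{d,W}_{ij}=\frac{\sum_{\alpha\in I_{r,n}\{j\}}\left|\left((\mathbf W\mathbf A)^{k+2}_{j.}(\bar{\mathbf u}^{(k)}_{i.})\right)^{\alpha}_{\alpha}\right|}{\sum_{\alpha\in I_{r,n}}\left|((\mathbf W\mathbf A)^{k+2})^{\alpha}_{\alpha}\right|}, \] where $\bar{\mathbf v}^{(k)}_{.j}$ is the $j$-th column of $(\mathbf A\mathbf W)^{k}\mathbf A$ and $\bar{\mathbf u}^{(k)}_{i.}$ is the $i$-th row of $\mathbf A(\mathbf W\mathbf A)^{k}$.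
   Context: All matrices are complex. For a square $\mathbf M$, $\operatorname{Ind}\mathbf M$ is the smallest nonnegative integer $k$ with $\operatorname{rank}\mathbf M^{k+1}=\operatorname{rank}\mathbf M^{k}$. The $\mathbf W$-weighted Drazin inverse $\mathbf A_{d,W}$ is the unique $\mathbf X\in\mathbb C^{m\times n}$ with $(\mathbf A\mathbf W)^{k+1}\mathbf X\mathbf W=(\mathbf A\mathbf W)^{k}$, $\mathbf X\mathbf W\mathbf A\mathbf W\mathbf X=\mathbf X$, $\mathbf A\mathbf W\mathbf X=\mathbf X\mathbf W\mathbf A$, with $k=\max\{\operatorname{Ind}(\mathbf A\mathbf W),\operatorname{Ind}(\mathbf W\mathbf A)\}$. For a square matrix $\mathbf M$, $\mathbf M_{.i}(\mathbf c)$ (resp. $\mathbf M_{i.}(\mathbf c)$) is obtained from $\mathbf M$ by replacing its $i$-th column (resp. row) by the vector $\mathbf c$. For $1\le k\le p$, $L_{k,p}$ is the set of strictly increasing sequences of $k$ elements of $\{1,\dots,p\}$; $I_{k,p}=J_{k,p}=L_{k,p}$, $I_{k,p}\{i\}=J_{k,p}\{i\}=\{\alpha\in L_{k,p}: i\in\alpha\}$. $\mathbf M^{\alpha}_{\alpha}$ is the principal submatrix indexed by $\alpha$; $|\cdot|$ is the determinant. *)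

theory Defs
  imports "Jordan_Normal_Form.DL_Rank" "Jordan_Normal_Form.DL_Submatrix"
begin

definition mrank :: "complex mat \<Rightarrow> nat" where
  "mrank M = vec_space.rank (dim_row M) M"

definition mind :: "complex mat \<Rightarrow> nat" where
  "mind M = (LEAST k. mrank (M ^\<^sub>m (k+1)) = mrank (M ^\<^sub>m k))"

definition is_wdrazin :: "complex mat \<Rightarrow> complex mat \<Rightarrow> complex mat \<Rightarrow> bool" where
  "is_wdrazin A W X \<longleftrightarrow>
     (let k = max (mind (A * W)) (mind (W * A)) in
       X \<in> carrier_mat (dim_row A) (dim_col A) \<and>
       (A * W) ^\<^sub>m (k+1) * X * W = (A * W) ^\<^sub>m k \<and>
       X * W * A * W * X = X \<and>
       A * W * X = X * W * A)"

definition replace_col :: "complex mat \<Rightarrow> nat \<Rightarrow> complex vec \<Rightarrow> complex mat" where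
  "replace_col M i c = mat (dim_row M) (dim_col M) (\<lambda>(a,b). if b = i then c $ a else M $$ (a,b))"

definition replace_row :: "complex mat \<Rightarrow> nat \<Rightarrow> complex vec \<Rightarrow> complex mat" where
  "replace_row M i c = mat (dim_row M) (dim_col M) (\<lambda>(a,b). if a = i then c $ b else M $$ (a,b))"

definition psub :: "complex mat \<Rightarrow> nat set \<Rightarrow> complex mat" where
  "psub M \<beta> = submatrix M \<beta> \<beta>"

(* L_{r,p}: r-element (strictly increasing) index sequences of {1..p}, 0-based as subsets *)
definition Lset :: "nat \<Rightarrow> nat \<Rightarrow> nat set set" where
  "Lset r p = {\<beta>. \<beta> \<subseteq> {0..<p} \<and> card \<beta> = r}"

end

theory Submission
  imports Defs "Jordan_Normal_Form.DL_Rank_Submatrix" "Jordan_Normal_Form.Char_Poly" "Jordan_Normal_Form.VS_Connect" "Jordan_Normal_Form.Matrix_Kernel"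
begin

lemma rank_nullity_mat:
  fixes A :: "'a :: field mat"
  assumes A: "A \<in> carrier_mat nr nc"
  shows "vec_space.rank nr A + kernel.dim nc A = nc"
proof -
  interpret K: kernel nr nc A by (unfold_locales, rule A)
  interpret NR: vec_space "TYPE('a)" nr .
  have hom: "(\<lambda>v. A *\<^sub>v v) \<in> LinearCombinations.module_hom class_ring (module_vec TYPE('a) nc) (module_vec TYPE('a) nr)"
    unfolding LinearCombinations.module_hom_def using A
    by (auto simp: module_vec_simps mult_add_distrib_mat_vec mult_mat_vec)
  interpret LM: linear_map class_ring "module_vec TYPE('a) nc" "module_vec TYPE('a) nr" "\<lambda>v. A *\<^sub>v v"
    by (intro linear_map.intro vec_vs mod_hom.intro mod_hom_axioms.intro vec_module hom)
  have rn: "vectorspace.dim class_ring ((module_vec TYPE('a) nr)\<lparr>carrier := LM.imT\<rparr>)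
      + vectorspace.dim class_ring ((module_vec TYPE('a) nc)\<lparr>carrier := LM.kerT\<rparr>) = K.NC.dim"
    by (rule LM.rank_nullity) simp
  have im: "LM.imT = NR.col_space A"
    unfolding NR.col_space_eq[OF A] mod_hom.im_def[OF LM.mod_hom_axioms] using A
    by (auto simp: module_vec_simps)
  have ker: "LM.kerT = mat_kernel A"
    unfolding mod_hom.ker_def[OF LM.mod_hom_axioms] mat_kernel_def using A
    by (auto simp: module_vec_simps)
  show ?thesis using rn unfolding im ker K.NC.dim_is_n NR.rank_def NR.col_space_def by simp
qed


lemma (in vec_space) dim_mono:
  assumes T: "VectorSpace.subspace class_ring T V" and S: "VectorSpace.subspace class_ring S V" and ST: "S \<subseteq> T"
    and fT: "vectorspace.fin_dim class_ring (vs T)" and fS: "vectorspace.fin_dim class_ring (vs S)"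
  shows "vectorspace.dim class_ring (vs S) \<le> vectorspace.dim class_ring (vs T)"
  using vectorspace.subspace_dim[OF subspace_is_vs[OF T] nested_subspaces[OF T S ST] fT] fS
  by simp

lemma (in vec_space) kernel_subspace:
  assumes Y: "Y \<in> carrier_mat nr n"
  shows "VectorSpace.subspace class_ring (mat_kernel Y) V"
  unfolding VectorSpace.subspace_def submodule_def using Y
  by (auto simp: mat_kernel_def mult_add_distrib_mat_vec mult_mat_vec vectorspace_axioms
     module_axioms class_ring_simps)

lemma (in vec_space) kernel_fin_dim:
  assumes Y: "Y \<in> carrier_mat nr n"
  shows "vectorspace.fin_dim class_ring (vs (mat_kernel Y))"
proof -
  interpret K: kernel nr n Y by (unfold_locales, rule Y)
  obtain B where B: "finite B" "K.basis B" using kernel_basis_exists[OF Y] by auto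
  show ?thesis unfolding K.Ker.fin_dim_def using B K.Ker.basis_def by auto
qed


lemma (in vec_space) col_space_subspace:
  assumes A: "A \<in> carrier_mat n nc"
  shows "VectorSpace.subspace class_ring (col_space A) V"
  unfolding col_space_def using A by (intro span_is_subspace) (auto simp: cols_def)

lemma rank_mult_left:
  fixes A :: "'a :: field mat"
  assumes A: "A \<in> carrier_mat a b" and B: "B \<in> carrier_mat b c"
  shows "vec_space.rank a (A * B) \<le> vec_space.rank a A"
proof -
  interpret V: vec_space "TYPE('a)" a .
  have AB: "A * B \<in> carrier_mat a c" using A B by auto
  have sub: "V.col_space (A * B) \<subseteq> V.col_space A"
    unfolding V.col_space_eq[OF AB] V.col_space_eq[OF A]
  proof safe
    fix x :: "'a vec" assume x: "x \<in> carrier_vec (dim_col (A * B))"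
    show "\<exists>xa\<in>carrier_vec (dim_col A). A *\<^sub>v xa = A * B *\<^sub>v x"
      using x A B by (intro bexI[of _ "B *\<^sub>v x"]) (auto simp: assoc_mult_mat_vec)
  qed (insert A B, auto)
  show ?thesis unfolding V.rank_def
    using V.dim_mono[OF V.col_space_subspace[OF A] V.col_space_subspace[OF AB] sub
      V.fin_dim_span_cols[OF A, folded V.col_space_def] V.fin_dim_span_cols[OF AB, folded V.col_space_def]]
    unfolding V.col_space_def .
qed

lemma kdim_mono:
  fixes A :: "'a :: field mat"
  assumes A: "A \<in> carrier_mat a b" and B: "B \<in> carrier_mat b c"
  shows "kernel.dim c B \<le> kernel.dim c (A * B)"
proof -
  interpret V: vec_space "TYPE('a)" c .
  have AB: "A * B \<in> carrier_mat a c" using A B by auto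
  show ?thesis
    using V.dim_mono[OF V.kernel_subspace[OF AB] V.kernel_subspace[OF B] mat_kernel_mult_subset[OF B A]
      V.kernel_fin_dim[OF AB] V.kernel_fin_dim[OF B]] by simp
qed

lemma rank_mult_right:
  fixes A :: "'a :: field mat"
  assumes A: "A \<in> carrier_mat a b" and B: "B \<in> carrier_mat b c"
  shows "vec_space.rank a (A * B) \<le> vec_space.rank b B"
  using rank_nullity_mat[OF B] rank_nullity_mat[of "A * B" a c] kdim_mono[OF A B] A B by fastforce

lemma rank_sylvester:
  fixes A :: "'a :: field mat"
  assumes A: "A \<in> carrier_mat a b" and B: "B \<in> carrier_mat b c" and AB: "A * B = 0\<^sub>m a c"
  shows "vec_space.rank a A + vec_space.rank b B \<le> b"
proof -
  interpret V: vec_space "TYPE('a)" b .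
  have sub: "V.col_space B \<subseteq> mat_kernel A"
    unfolding V.col_space_eq[OF B]
  proof safe
    fix x :: "'a vec" assume x: "x \<in> carrier_vec (dim_col B)"
    have "A *\<^sub>v (B *\<^sub>v x) = (A * B) *\<^sub>v x" using A B x by (auto simp: assoc_mult_mat_vec)
    also have "\<dots> = 0\<^sub>v a" unfolding AB using x B by auto
    finally show "B *\<^sub>v x \<in> mat_kernel A" using A B x by (intro mat_kernelI[OF A]) auto
  qed
  have "vec_space.rank b B \<le> kernel.dim b A"
    unfolding V.rank_def
    using V.dim_mono[OF V.kernel_subspace[OF A] V.col_space_subspace[OF B] sub
      V.kernel_fin_dim[OF A] V.fin_dim_span_cols[OF B, folded V.col_space_def]]
    unfolding V.col_space_def by simp
  then show ?thesis using rank_nullity_mat[OF A] by simp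
qed


definition mask :: "nat \<Rightarrow> nat set \<Rightarrow> 'a::comm_ring_1 mat \<Rightarrow> 'a mat" where
  "mask m \<beta> C = mat m m (\<lambda>(a,b). if a \<in> \<beta> \<and> b \<in> \<beta> then C $$ (a,b) else if a = b then 1 else 0)"

lemma mask_carrier[simp]: "mask m \<beta> C \<in> carrier_mat m m"
  unfolding mask_def by auto

lemma signof_square: "(signof p :: 'a :: comm_ring_1) * signof p = 1"
  by (simp add: sign_def)

lemma det_conj_perm:
  fixes Z :: "'a :: comm_ring_1 mat"
  assumes Z: "Z \<in> carrier_mat m m" and \<sigma>: "\<sigma> permutes {0..<m}"
  shows "det (mat m m (\<lambda>(a,b). Z $$ (\<sigma> a, \<sigma> b))) = det Z"
proof -
  let ?Z1 = "mat m m (\<lambda>(a,b). Z $$ (\<sigma> a, b))"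
  have Z1: "?Z1 \<in> carrier_mat m m" by auto
  have sm: "\<And>i. i < m \<Longrightarrow> \<sigma> i < m" using \<sigma> by (simp add: permutes_in_image)
  have eq: "mat m m (\<lambda>(a,b). Z $$ (\<sigma> a, \<sigma> b)) =
      transpose_mat (mat m m (\<lambda>(i,j). (transpose_mat ?Z1) $$ (\<sigma> i, j)))"
    by (rule eq_matI) (auto simp: sm)
  have "det (mat m m (\<lambda>(a,b). Z $$ (\<sigma> a, \<sigma> b))) = det (mat m m (\<lambda>(i,j). (transpose_mat ?Z1) $$ (\<sigma> i, j)))"
    unfolding eq by (rule det_transpose) auto
  also have "\<dots> = signof \<sigma> * det (transpose_mat ?Z1)"
    by (rule det_permute_rows[OF _ \<sigma>]) auto
  also have "det (transpose_mat ?Z1) = det ?Z1" by (rule det_transpose[OF Z1])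
  also have "det ?Z1 = signof \<sigma> * det Z" by (rule det_permute_rows[OF Z \<sigma>])
  finally show ?thesis by (simp add: mult.assoc[symmetric] signof_square)
qed

lemma pick_bij:
  assumes fin: "finite \<beta>"
  shows "bij_betw (pick \<beta>) {0..<card \<beta>} \<beta>"
proof -
  have inj: "inj_on (pick \<beta>) {0..<card \<beta>}"
    unfolding inj_on_def by (metis atLeastLessThan_iff nat_neq_iff pick_mono)
  have sub: "pick \<beta> ` {0..<card \<beta>} \<subseteq> \<beta>" using pick_in_set by auto
  have "card (pick \<beta> ` {0..<card \<beta>}) = card \<beta>" using card_image[OF inj] by simp
  then have "pick \<beta> ` {0..<card \<beta>} = \<beta>" using card_subset_eq[OF fin sub] by simp
  then show ?thesis using inj unfolding bij_betw_def by simp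
qed

lemma det_psub_mask:
  fixes C :: "complex mat"
  assumes C: "C \<in> carrier_mat m m" and \<beta>: "\<beta> \<subseteq> {0..<m}"
  shows "det (psub C \<beta>) = det (mask m \<beta> C)"
proof -
  define k where "k = card \<beta>"
  have fin: "finite \<beta>" using \<beta> finite_subset by blast
  have km: "k \<le> m" unfolding k_def using card_mono[OF _ \<beta>] by simp
  have kk: "card {i. i < m \<and> i \<in> \<beta>} = k" unfolding k_def
    by (rule arg_cong[of _ _ card]) (use \<beta> in auto)
  have ps: "psub C \<beta> = mat k k (\<lambda>(i,j). C $$ (pick \<beta> i, pick \<beta> j))"
    unfolding psub_def submatrix_def using C kk by auto
  have cU: "card ({0..<m} - \<beta>) = card {k..<m}"
    using card_Diff_subset[OF fin \<beta>] unfolding k_def by simp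
  obtain \<tau> where \<tau>: "bij_betw \<tau> {k..<m} ({0..<m} - \<beta>)"
    using finite_same_card_bij[of "{k..<m}" "{0..<m} - \<beta>"] cU by auto
  define \<sigma> where "\<sigma> a = (if a < k then pick \<beta> a else if a < m then \<tau> a else a)" for a
  have b1: "bij_betw \<sigma> {0..<k} \<beta>"
    using pick_bij[OF fin] unfolding k_def[symmetric]
    by (rule bij_betw_cong[THEN iffD1, rotated]) (auto simp: \<sigma>_def)
  have b2: "bij_betw \<sigma> {k..<m} ({0..<m} - \<beta>)"
    using \<tau> by (rule bij_betw_cong[THEN iffD1, rotated]) (auto simp: \<sigma>_def)
  have b: "bij_betw \<sigma> ({0..<k} \<union> {k..<m}) (\<beta> \<union> ({0..<m} - \<beta>))"
    by (rule bij_betw_combine[OF b1 b2]) auto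
  have U1: "{0..<k} \<union> {k..<m} = {0..<m}" using km by auto
  have U2: "\<beta> \<union> ({0..<m} - \<beta>) = {0..<m}" using \<beta> by auto
  have \<sigma>p: "\<sigma> permutes {0..<m}"
    using b unfolding U1 U2 using km by (intro bij_imp_permutes) (auto simp: \<sigma>_def)
  have sl: "\<And>a. a < k \<Longrightarrow> \<sigma> a \<in> \<beta>" using b1 bij_betwE by fastforce
  have sg: "\<And>a. k \<le> a \<Longrightarrow> a < m \<Longrightarrow> \<sigma> a \<in> {0..<m} - \<beta>" using b2 bij_betwE by fastforce
  have sinj: "\<And>a b. a < m \<Longrightarrow> b < m \<Longrightarrow> \<sigma> a = \<sigma> b \<longleftrightarrow> a = b"
    using permutes_inj[OF \<sigma>p] by (auto dest: injD)
  have eq: "mat m m (\<lambda>(a,b). mask m \<beta> C $$ (\<sigma> a, \<sigma> b)) =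
     four_block_mat (psub C \<beta>) (0\<^sub>m k (m-k)) (0\<^sub>m (m-k) k) (1\<^sub>m (m-k))"
  proof (rule eq_matI)
    fix a b assume a: "a < dim_row (four_block_mat (psub C \<beta>) (0\<^sub>m k (m-k)) (0\<^sub>m (m-k) k) (1\<^sub>m (m-k)))"
      and b: "b < dim_col (four_block_mat (psub C \<beta>) (0\<^sub>m k (m-k)) (0\<^sub>m (m-k) k) (1\<^sub>m (m-k)))"
    have a': "a < m" and b': "b < m" using a b km by (auto simp: ps)
    have sa: "\<sigma> a < m" "\<sigma> b < m" using a' b' \<sigma>p by (auto simp: permutes_in_image)
    show "mat m m (\<lambda>(a,b). mask m \<beta> C $$ (\<sigma> a, \<sigma> b)) $$ (a, b) =
      four_block_mat (psub C \<beta>) (0\<^sub>m k (m-k)) (0\<^sub>m (m-k) k) (1\<^sub>m (m-k)) $$ (a, b)"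
    proof (cases "a < k"; cases "b < k")
      assume "a < k" "b < k" then show ?thesis
        using a' b' sa sl[of a] sl[of b] by (simp add: mask_def ps \<sigma>_def)
    next
      assume "a < k" "\<not> b < k" then show ?thesis
        using a' b' sa sl[of a] sg[of b] by (auto simp: mask_def ps)
    next
      assume "\<not> a < k" "b < k" then show ?thesis
        using a' b' sa sl[of b] sg[of a] by (auto simp: mask_def ps)
    next
      assume "\<not> a < k" "\<not> b < k" then show ?thesis
        using a' b' sa sg[of a] sg[of b] sinj[OF a' b'] by (auto simp: mask_def ps)
    qed
  qed (auto simp: ps km)
  have "det (mask m \<beta> C) = det (mat m m (\<lambda>(a,b). mask m \<beta> C $$ (\<sigma> a, \<sigma> b)))"
    by (rule det_conj_perm[OF mask_carrier \<sigma>p, symmetric])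
  also have "\<dots> = det (psub C \<beta>) * det (1\<^sub>m (m-k) :: complex mat)"
    unfolding eq by (rule det_four_block_mat_lower_left_zero) (auto simp: ps)
  finally show ?thesis by simp
qed

lemma det_add_diag_term:
  fixes C :: "'a :: comm_ring_1 mat"
  assumes C: "C \<in> carrier_mat m m" and p: "p permutes {0..<m}" and S: "S \<subseteq> {0..<m}"
  shows "signof p * ((\<Prod>a\<in>S. if p a = a then d a else 0) * (\<Prod>a\<in>{0..<m} - S. C $$ (a, p a)))
    = (\<Prod>a\<in>S. d a) * (signof p * (\<Prod>a\<in>{0..<m}. mask m ({0..<m} - S) C $$ (a, p a)))"
proof (cases "\<forall>a\<in>S. p a = a")
  case True
  have pm: "\<And>a. a < m \<Longrightarrow> p a < m" using p by (simp add: permutes_in_image)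
  have 1: "(\<Prod>a\<in>S. if p a = a then d a else 0) = (\<Prod>a\<in>S. d a)"
    using True by (intro prod.cong) auto
  have fin: "finite S" using S finite_subset by blast
  have split: "(\<Prod>a\<in>{0..<m}. mask m ({0..<m} - S) C $$ (a, p a)) =
     (\<Prod>a\<in>S. mask m ({0..<m} - S) C $$ (a, p a)) * (\<Prod>a\<in>{0..<m} - S. mask m ({0..<m} - S) C $$ (a, p a))"
    using prod.subset_diff[OF S] by (simp add: mult.commute)
  have 2: "(\<Prod>a\<in>S. mask m ({0..<m} - S) C $$ (a, p a)) = 1"
    using True S by (intro prod.neutral) (auto simp: mask_def)
  have 3: "(\<Prod>a\<in>{0..<m} - S. mask m ({0..<m} - S) C $$ (a, p a)) = (\<Prod>a\<in>{0..<m} - S. C $$ (a, p a))"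
  proof (intro prod.cong refl)
    fix a assume a: "a \<in> {0..<m} - S"
    have "p a \<notin> S"
    proof
      assume "p a \<in> S"
      then have "p (p a) = p a" using True by auto
      then have "p a = a" using permutes_inj[OF p] by (auto dest: injD)
      then show False using a \<open>p a \<in> S\<close> by auto
    qed
    then show "mask m ({0..<m} - S) C $$ (a, p a) = C $$ (a, p a)"
      using a pm[of a] by (auto simp: mask_def)
  qed
  show ?thesis unfolding 1 split 2 3 by simp
next
  case False
  then obtain a where a: "a \<in> S" "p a \<noteq> a" by auto
  have fin: "finite S" using S finite_subset by blast
  have 1: "(\<Prod>a\<in>S. if p a = a then d a else 0) = 0"
    using a fin by (intro prod_zero) auto
  have am: "a < m" using a S by auto
  have pm: "p a < m" using p am by (simp add: permutes_in_image)
  have 2: "(\<Prod>a\<in>{0..<m}. mask m ({0..<m} - S) C $$ (a, p a)) = 0"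
    using a am pm by (intro prod_zero) (auto intro!: bexI[of _ a] simp: mask_def)
  show ?thesis unfolding 1 2 by simp
qed

lemma det_add_diag:
  fixes C :: "'a :: comm_ring_1 mat"
  assumes C: "C \<in> carrier_mat m m"
  shows "det (C + mat m m (\<lambda>(a,b). if a = b then d a else 0)) =
    (\<Sum>\<beta>\<in>Pow {0..<m}. (\<Prod>a\<in>{0..<m} - \<beta>. d a) * det (mask m \<beta> C))"
proof -
  let ?U = "{0..<m}"
  let ?D = "mat m m (\<lambda>(a,b). if a = b then d a else 0)"
  have CD: "C + ?D \<in> carrier_mat m m" using C by auto
  have "det (C + ?D) = (\<Sum>p\<in>{p. p permutes ?U}. signof p * (\<Prod>a\<in>?U. (C + ?D) $$ (a, p a)))"
    by (rule det_def'[OF CD])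
  also have "\<dots> = (\<Sum>p\<in>{p. p permutes ?U}. signof p * (\<Sum>S\<in>Pow ?U.
      (\<Prod>a\<in>S. if p a = a then d a else 0) * (\<Prod>a\<in>?U - S. C $$ (a, p a))))"
  proof (rule sum.cong[OF refl])
    fix p assume p: "p \<in> {p. p permutes ?U}"
    have pm: "\<And>a. a < m \<Longrightarrow> p a < m" using p by (simp add: permutes_in_image)
    have "(\<Prod>a\<in>?U. (C + ?D) $$ (a, p a)) = (\<Prod>a\<in>?U. (if p a = a then d a else 0) + C $$ (a, p a))"
      by (rule prod.cong[OF refl]) (use C pm in \<open>auto\<close>)
    also have "\<dots> = (\<Sum>S\<in>Pow ?U. (\<Prod>a\<in>S. if p a = a then d a else 0) * (\<Prod>a\<in>?U - S. C $$ (a, p a)))"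
      by (rule prod_add) simp
    finally show "signof p * (\<Prod>a\<in>?U. (C + ?D) $$ (a, p a)) = signof p * (\<Sum>S\<in>Pow ?U.
      (\<Prod>a\<in>S. if p a = a then d a else 0) * (\<Prod>a\<in>?U - S. C $$ (a, p a)))" by simp
  qed
  also have "\<dots> = (\<Sum>p\<in>{p. p permutes ?U}. \<Sum>S\<in>Pow ?U.
      (\<Prod>a\<in>S. d a) * (signof p * (\<Prod>a\<in>?U. mask m (?U - S) C $$ (a, p a))))"
    unfolding sum_distrib_left
    by (intro sum.cong refl det_add_diag_term[OF C]) auto
  also have "\<dots> = (\<Sum>S\<in>Pow ?U. \<Sum>p\<in>{p. p permutes ?U}.
      (\<Prod>a\<in>S. d a) * (signof p * (\<Prod>a\<in>?U. mask m (?U - S) C $$ (a, p a))))"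
    by (rule sum.swap)
  also have "\<dots> = (\<Sum>S\<in>Pow ?U. (\<Prod>a\<in>S. d a) * det (mask m (?U - S) C))"
    unfolding sum_distrib_left[symmetric] by (subst det_def'[OF mask_carrier]) simp
  also have "\<dots> = (\<Sum>\<beta>\<in>Pow ?U. (\<Prod>a\<in>?U - \<beta>. d a) * det (mask m \<beta> C))"
    by (rule sum.reindex_bij_witness[of _ "\<lambda>\<beta>. ?U - \<beta>" "\<lambda>S. ?U - S"]) (auto simp: double_diff)
  finally show ?thesis .
qed

lemma det_mask_smult:
  fixes C :: "'a :: comm_ring_1 mat"
  assumes C: "C \<in> carrier_mat m m" and \<beta>: "\<beta> \<subseteq> {0..<m}"
  shows "det (mask m \<beta> (s \<cdot>\<^sub>m C)) = s ^ card \<beta> * det (mask m \<beta> C)"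
proof -
  let ?U = "{0..<m}"
  have "det (mask m \<beta> (s \<cdot>\<^sub>m C)) = (\<Sum>p\<in>{p. p permutes ?U}. signof p * (\<Prod>a\<in>?U. mask m \<beta> (s \<cdot>\<^sub>m C) $$ (a, p a)))"
    by (rule det_def'[OF mask_carrier])
  also have "\<dots> = (\<Sum>p\<in>{p. p permutes ?U}. s ^ card \<beta> * (signof p * (\<Prod>a\<in>?U. mask m \<beta> C $$ (a, p a))))"
  proof (rule sum.cong[OF refl])
    fix p assume p: "p \<in> {p. p permutes ?U}"
    have pm: "\<And>a. a < m \<Longrightarrow> p a < m" using p by (simp add: permutes_in_image)
    have "(\<Prod>a\<in>?U. mask m \<beta> (s \<cdot>\<^sub>m C) $$ (a, p a)) = (\<Prod>a\<in>?U. (if a \<in> \<beta> then s else 1) * mask m \<beta> C $$ (a, p a))"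
      by (rule prod.cong[OF refl]) (use C pm in \<open>auto simp: mask_def\<close>)
    also have "\<dots> = (\<Prod>a\<in>?U. (if a \<in> \<beta> then s else 1)) * (\<Prod>a\<in>?U. mask m \<beta> C $$ (a, p a))"
      by (rule prod.distrib)
    also have "(\<Prod>a\<in>?U. (if a \<in> \<beta> then s else 1)) = (\<Prod>a\<in>{a\<in>?U. a \<in> \<beta>}. s)"
      by (rule prod.inter_filter[symmetric]) simp
    also have "{a\<in>?U. a \<in> \<beta>} = \<beta>" using \<beta> by auto
    finally show "signof p * (\<Prod>a\<in>?U. mask m \<beta> (s \<cdot>\<^sub>m C) $$ (a, p a)) =
      s ^ card \<beta> * (signof p * (\<Prod>a\<in>?U. mask m \<beta> C $$ (a, p a)))" by simp
  qed
  also have "\<dots> = s ^ card \<beta> * det (mask m \<beta> C)"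
    unfolding sum_distrib_left[symmetric] by (subst det_def'[OF mask_carrier]) simp
  finally show ?thesis .
qed


lemma replace_col_carrier[simp]: "M \<in> carrier_mat m m \<Longrightarrow> replace_col M i c \<in> carrier_mat m m"
  unfolding replace_col_def by auto

lemma replace_col_eq: "replace_col M i c = Determinant.replace_col M c i"
  unfolding replace_col_def Determinant.replace_col_def ..

lemma det_replace_col_lin:
  assumes W: "W \<in> carrier_mat m m" and y: "y \<in> carrier_vec m" and i: "i < m"
  shows "det (replace_col W i y) = (\<Sum>a<m. y $ a * cofactor W a i)"
proof -
  have R: "replace_col W i y \<in> carrier_mat m m" using W by simp
  have "det (replace_col W i y) = (\<Sum>a<m. replace_col W i y $$ (a, i) * cofactor (replace_col W i y) a i)"
    by (rule laplace_expansion_column[OF R i])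
  also have "\<dots> = (\<Sum>a<m. y $ a * cofactor W a i)"
  proof (rule sum.cong[OF refl])
    fix a assume a: "a \<in> {..<m}"
    have "mat_delete (replace_col W i y) a i = mat_delete W a i"
      using W i by (intro eq_matI) (auto simp: mat_delete_def replace_col_def)
    then show "replace_col W i y $$ (a, i) * cofactor (replace_col W i y) a i = y $ a * cofactor W a i"
      using a W i by (simp add: cofactor_def replace_col_def)
  qed
  finally show ?thesis .
qed

lemma det_replace_col_add:
  assumes W: "W \<in> carrier_mat m m" and u: "u \<in> carrier_vec m" and v: "v \<in> carrier_vec m" and i: "i < m"
  shows "det (replace_col W i (u + t \<cdot>\<^sub>v v)) = det (replace_col W i u) + t * det (replace_col W i v)"
proof -
  have uv: "u + t \<cdot>\<^sub>v v \<in> carrier_vec m" using u v by auto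
  show ?thesis
  unfolding det_replace_col_lin[OF W uv i] det_replace_col_lin[OF W u i] det_replace_col_lin[OF W v i]
  using u v by (auto simp: sum.distrib sum_distrib_left algebra_simps intro!: sum.cong)
qed

lemma prod_diag_if:
  assumes \<beta>: "\<beta> \<subseteq> {0..<m}" and i: "i < m"
  shows "(\<Prod>a\<in>{0..<m} - \<beta>. if a = i then 0 else (t::complex)) = (if i \<in> \<beta> then t ^ (m - card \<beta>) else 0)"
proof (cases "i \<in> \<beta>")
  case True
  have "(\<Prod>a\<in>{0..<m} - \<beta>. if a = i then 0 else t) = (\<Prod>a\<in>{0..<m} - \<beta>. t)"
    using True by (intro prod.cong) auto
  also have "\<dots> = t ^ (m - card \<beta>)"
    using card_Diff_subset[OF finite_subset[OF \<beta>] \<beta>] by simp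
  finally show ?thesis using True by simp
next
  case False
  have "(\<Prod>a\<in>{0..<m} - \<beta>. if a = i then 0 else t) = 0"
    by (rule prod_zero) (use False i in auto)
  then show ?thesis using False by simp
qed

lemma smult_one_mult_mat_vec:
  assumes x: "(x :: complex vec) \<in> carrier_vec m"
  shows "(t \<cdot>\<^sub>m 1\<^sub>m m) *\<^sub>v x = t \<cdot>\<^sub>v x"
proof (rule eq_vecI)
  fix a assume a: "a < dim_vec (t \<cdot>\<^sub>v x)"
  then have am: "a < m" using x by simp
  have "((t \<cdot>\<^sub>m 1\<^sub>m m) *\<^sub>v x) $ a = (\<Sum>b\<in>{0..<m}. t * (if b = a then 1 else 0) * x $ b)"
    using am x by (auto simp: scalar_prod_def)
  also have "\<dots> = (\<Sum>b\<in>{0..<m}. if b = a then t * x $ b else 0)" by (intro sum.cong) auto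
  also have "\<dots> = t * x $ a" using am by simp
  finally show "((t \<cdot>\<^sub>m 1\<^sub>m m) *\<^sub>v x) $ a = (t \<cdot>\<^sub>v x) $ a" using am x by simp
qed (use x in auto)

lemma coreA:
  fixes Z :: "complex mat" and x :: "complex vec"
  assumes Z: "Z \<in> carrier_mat m m" and x: "x \<in> carrier_vec m" and i: "i < m" and s: "s \<le> m"
    and van: "\<And>\<beta>. \<beta> \<subseteq> {0..<m} \<Longrightarrow> card \<beta> = Suc s \<Longrightarrow> i \<in> \<beta> \<Longrightarrow> det (mask m \<beta> (replace_col Z i x)) = 0"
  shows "(\<Sum>\<beta>\<in>{\<beta>. \<beta> \<subseteq> {0..<m} \<and> card \<beta> = s \<and> i \<in> \<beta>}. det (mask m \<beta> (replace_col Z i (Z *\<^sub>v x))))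
     = x $ i * (\<Sum>\<beta>\<in>{\<beta>. \<beta> \<subseteq> {0..<m} \<and> card \<beta> = s}. det (mask m \<beta> Z))"
proof -
  let ?U = "{0..<m}"
  define nA where "nA \<beta> = det (mask m \<beta> (replace_col Z i (Z *\<^sub>v x)))" for \<beta>
  define nB where "nB \<beta> = det (mask m \<beta> (replace_col Z i x))" for \<beta>
  define cZ where "cZ \<beta> = det (mask m \<beta> Z)" for \<beta>
  define PL where "PL = (\<Sum>\<beta>\<in>Pow ?U. if i \<in> \<beta> then monom (nA \<beta>) (m - card \<beta>) + monom (nB \<beta>) (m - card \<beta> + 1) else 0)"
  define PR where "PR = (\<Sum>\<beta>\<in>Pow ?U. monom (x $ i * cZ \<beta>) (m - card \<beta>))"
  have Zx: "Z *\<^sub>v x \<in> carrier_vec m" using Z x by auto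
  have cardle: "\<And>\<beta>. \<beta> \<subseteq> ?U \<Longrightarrow> card \<beta> \<le> m" using card_mono[of ?U] by fastforce
  have "poly PL t = poly PR t" for t
  proof -
    let ?Zt = "Z + t \<cdot>\<^sub>m 1\<^sub>m m"
    let ?d = "\<lambda>a. if a = i then 0 else t"
    have Zt: "?Zt \<in> carrier_mat m m" using Z by auto
    have eqZt: "?Zt = Z + mat m m (\<lambda>(a,b). if a = b then t else 0)"
      using Z by (intro eq_matI) auto
    have rc: "\<And>y. replace_col ?Zt i y = replace_col Z i y + mat m m (\<lambda>(a,b). if a = b then ?d a else 0)"
      using Z by (intro eq_matI) (auto simp: replace_col_def)
    have Ztx: "?Zt *\<^sub>v x = Z *\<^sub>v x + t \<cdot>\<^sub>v x"
      using Z x by (simp add: add_mult_distrib_mat_vec[OF Z _ x] smult_one_mult_mat_vec)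
    have "det (replace_col ?Zt i (?Zt *\<^sub>v x)) = x $ i * det ?Zt"
      using cramer_lemma_mat[OF Zt x i] unfolding replace_col_eq .
    also have "det (replace_col ?Zt i (?Zt *\<^sub>v x)) = det (replace_col ?Zt i (Z *\<^sub>v x)) + t * det (replace_col ?Zt i x)"
      unfolding Ztx by (rule det_replace_col_add[OF Zt Zx x i])
    finally have main: "det (replace_col ?Zt i (Z *\<^sub>v x)) + t * det (replace_col ?Zt i x) = x $ i * det ?Zt" .
    have e1: "\<And>y. y \<in> carrier_vec m \<Longrightarrow> det (replace_col ?Zt i y) =
      (\<Sum>\<beta>\<in>Pow ?U. (if i \<in> \<beta> then t ^ (m - card \<beta>) else 0) * det (mask m \<beta> (replace_col Z i y)))"
      unfolding rc using Z i
      by (subst det_add_diag) (auto intro!: sum.cong simp: prod_diag_if)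
    have e2: "det ?Zt = (\<Sum>\<beta>\<in>Pow ?U. t ^ (m - card \<beta>) * det (mask m \<beta> Z))"
      unfolding eqZt using Z
      by (subst det_add_diag) (auto intro!: sum.cong simp: card_Diff_subset finite_subset)
    have "poly PL t = (\<Sum>\<beta>\<in>Pow ?U. if i \<in> \<beta> then nA \<beta> * t ^ (m - card \<beta>) + nB \<beta> * t ^ (m - card \<beta> + 1) else 0)"
      unfolding PL_def poly_sum by (intro sum.cong) (auto simp: poly_monom)
    also have "\<dots> = det (replace_col ?Zt i (Z *\<^sub>v x)) + t * det (replace_col ?Zt i x)"
      unfolding e1[OF Zx] e1[OF x] sum_distrib_left sum.distrib[symmetric] nA_def nB_def
      by (intro sum.cong) (auto simp: algebra_simps)
    also have "\<dots> = x $ i * det ?Zt" by (rule main)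
    also have "\<dots> = poly PR t"
      unfolding e2 PR_def poly_sum sum_distrib_left cZ_def by (intro sum.cong) (auto simp: poly_monom)
    finally show ?thesis .
  qed
  then have PLR: "PL = PR" using poly_eq_poly_eq_iff by blast
  have "coeff PL (m - s) = (\<Sum>\<beta>\<in>Pow ?U. (if i \<in> \<beta> \<and> card \<beta> = s then nA \<beta> else 0)
       + (if i \<in> \<beta> \<and> card \<beta> = Suc s then nB \<beta> else 0))"
    unfolding PL_def coeff_sum
  proof (intro sum.cong refl)
    fix \<beta> assume "\<beta> \<in> Pow ?U"
    then have c: "card \<beta> \<le> m" using cardle by auto
    show "coeff (if i \<in> \<beta> then monom (nA \<beta>) (m - card \<beta>) + monom (nB \<beta>) (m - card \<beta> + 1) else 0) (m - s) =
      (if i \<in> \<beta> \<and> card \<beta> = s then nA \<beta> else 0) + (if i \<in> \<beta> \<and> card \<beta> = Suc s then nB \<beta> else 0)"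
      using c s by (auto simp: coeff_monom)
  qed
  also have "\<dots> = (\<Sum>\<beta>\<in>Pow ?U. if i \<in> \<beta> \<and> card \<beta> = s then nA \<beta> else 0)"
    unfolding sum.distrib using van by (auto simp: nB_def intro!: sum.neutral)
  also have "\<dots> = (\<Sum>\<beta>\<in>{\<beta>. \<beta> \<subseteq> ?U \<and> card \<beta> = s \<and> i \<in> \<beta>}. nA \<beta>)"
    by (subst sum.inter_filter[symmetric]) (auto intro!: sum.cong)
  finally have L: "coeff PL (m - s) = (\<Sum>\<beta>\<in>{\<beta>. \<beta> \<subseteq> ?U \<and> card \<beta> = s \<and> i \<in> \<beta>}. nA \<beta>)" .
  have "coeff PR (m - s) = (\<Sum>\<beta>\<in>Pow ?U. if card \<beta> = s then x $ i * cZ \<beta> else 0)"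
    unfolding PR_def coeff_sum
  proof (intro sum.cong refl)
    fix \<beta> assume "\<beta> \<in> Pow ?U"
    then have c: "card \<beta> \<le> m" using cardle by auto
    show "coeff (monom (x $ i * cZ \<beta>) (m - card \<beta>)) (m - s) = (if card \<beta> = s then x $ i * cZ \<beta> else 0)"
      using c s by (auto simp: coeff_monom)
  qed
  also have "\<dots> = (\<Sum>\<beta>\<in>{\<beta>. \<beta> \<subseteq> ?U \<and> card \<beta> = s}. x $ i * cZ \<beta>)"
    by (subst sum.inter_filter[symmetric]) (auto intro!: sum.cong)
  finally have R: "coeff PR (m - s) = x $ i * (\<Sum>\<beta>\<in>{\<beta>. \<beta> \<subseteq> ?U \<and> card \<beta> = s}. cZ \<beta>)"
    by (simp add: sum_distrib_left)
  show ?thesis using L R PLR unfolding nA_def cZ_def by simp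
qed


lemma minus_zero_mat: "A \<in> carrier_mat nr nc \<Longrightarrow> A - 0\<^sub>m nr nc = (A :: 'a :: group_add mat)"
  by (intro eq_matI) auto

lemma factor_lemma:
  fixes B P E :: "complex mat"
  assumes B[simp]: "B \<in> carrier_mat m m" and P[simp]: "P \<in> carrier_mat m m" and E: "E = 1\<^sub>m m - P"
    and PP: "P * P = P" and PB: "P * B = B" and BP: "B * P = B"
  shows "(P + t \<cdot>\<^sub>m E) * ((E + B) + t \<cdot>\<^sub>m P) = t \<cdot>\<^sub>m 1\<^sub>m m + B"
proof -
  have Ec[simp]: "E \<in> carrier_mat m m" using E by (simp add: minus_carrier_mat)
  have PE: "P * E = 0\<^sub>m m m" unfolding E using PP by (simp add: right_mult_one_mat[OF P] mult_minus_distrib_mat[where nr=m and n=m and nc=m])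
  have EP: "E * P = 0\<^sub>m m m" unfolding E using PP by (simp add: left_mult_one_mat[OF P] minus_mult_distrib_mat[where nr=m and n=m and nc=m])
  have EE: "E * E = E"
  proof -
    have "E * E = E * 1\<^sub>m m - E * P" using mult_minus_distrib_mat[OF Ec one_carrier_mat P] E by simp
    also have "\<dots> = E" unfolding EP using Ec by (simp add: right_mult_one_mat[OF Ec] minus_zero_mat)
    finally show ?thesis .
  qed
  have EB: "E * B = 0\<^sub>m m m" unfolding E using PB by (simp add: left_mult_one_mat[OF B] minus_mult_distrib_mat[where nr=m and n=m and nc=m])
  have "(P + t \<cdot>\<^sub>m E) * ((E + B) + t \<cdot>\<^sub>m P) =
     P * E + t \<cdot>\<^sub>m (E * E) + (P * B + t \<cdot>\<^sub>m (E * B)) + t \<cdot>\<^sub>m (P * P + t \<cdot>\<^sub>m (E * P))"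
    by (simp add: add_mult_distrib_mat[where nr=m and n=m and nc=m] mult_add_distrib_mat[where nr=m and n=m and nc=m] mult_smult_distrib[where nr=m and n=m and nc=m]
      mult_smult_assoc_mat[where nr=m and n=m and nc=m])
  also have "\<dots> = t \<cdot>\<^sub>m 1\<^sub>m m + B"
    unfolding PE EP EE EB PP PB unfolding E
    using carrier_matD[OF B] carrier_matD[OF P] by (intro eq_matI) (auto simp: algebra_simps)
  finally show ?thesis .
qed

lemma inverse_lemma:
  fixes B G P E :: "complex mat"
  assumes B[simp]: "B \<in> carrier_mat m m" and G[simp]: "G \<in> carrier_mat m m" and P: "P = B * G"
    and E: "E = 1\<^sub>m m - P" and BGB: "B * G * B = B" and GBG: "G * B * G = G" and BG: "B * G = G * B"
  shows "(E + B) * (E + G) = 1\<^sub>m m"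
proof -
  have Pc[simp]: "P \<in> carrier_mat m m" unfolding P by (rule mult_carrier_mat[OF B G])
  have Ec[simp]: "E \<in> carrier_mat m m" using E by (simp add: minus_carrier_mat)
  have PP: "P * P = P" unfolding P using BGB assoc_mult_mat[OF Pc[unfolded P] B G, symmetric] by simp
  have PG: "P * G = G" unfolding P using GBG BG by simp
  have BP: "B * P = B" unfolding P using BGB BG assoc_mult_mat[OF B G B, symmetric] by simp
  have EE: "E * E = E"
  proof -
    have "E * E = E * 1\<^sub>m m - E * P" using mult_minus_distrib_mat[OF Ec one_carrier_mat Pc] E by simp
    also have "E * P = 0\<^sub>m m m" unfolding E using PP
      by (simp add: left_mult_one_mat[OF Pc] minus_mult_distrib_mat[where nr=m and n=m and nc=m])
    finally show ?thesis by (simp add: right_mult_one_mat[OF Ec] minus_zero_mat)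
  qed
  have EG: "E * G = 0\<^sub>m m m" unfolding E using PG
    by (simp add: left_mult_one_mat[OF G] minus_mult_distrib_mat[where nr=m and n=m and nc=m])
  have BE: "B * E = 0\<^sub>m m m" unfolding E using BP
    by (simp add: right_mult_one_mat[OF B] mult_minus_distrib_mat[where nr=m and n=m and nc=m])
  have "(E + B) * (E + G) = E * E + B * E + (E * G + B * G)"
    by (simp add: add_mult_distrib_mat[where nr=m and n=m and nc=m] mult_add_distrib_mat[where nr=m and n=m and nc=m])
  also have "\<dots> = 1\<^sub>m m"
    unfolding EE EG BE P[symmetric] unfolding E
    using carrier_matD[OF Pc] by (intro eq_matI) auto
  finally show ?thesis .
qed

lemma minor_vanish:
  fixes Z :: "complex mat"
  assumes Z: "Z \<in> carrier_mat m m" and \<beta>: "\<beta> \<subseteq> {0..<m}" and r: "vec_space.rank m Z < card \<beta>"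
  shows "det (mask m \<beta> Z) = 0"
proof (rule ccontr)
  assume "det (mask m \<beta> Z) \<noteq> 0"
  then have "det (submatrix Z \<beta> \<beta>) \<noteq> 0" using det_psub_mask[OF Z \<beta>] unfolding psub_def by simp
  from vec_space.rank_gt_minor[OF Z this]
  have "card {j. j < m \<and> j \<in> \<beta>} \<le> vec_space.rank m Z" .
  moreover have "{j. j < m \<and> j \<in> \<beta>} = \<beta>" using \<beta> by auto
  ultimately show False using r by simp
qed

lemma poly_eq_nonzero:
  fixes p q :: "complex poly"
  assumes "\<And>t. t \<noteq> 0 \<Longrightarrow> poly p t = poly q t"
  shows "p = q"
proof (rule ccontr)
  assume "p \<noteq> q"
  then have "p - q \<noteq> 0" by simp
  from poly_roots_finite[OF this] have "finite {t. poly (p - q) t = 0}" .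
  moreover have "UNIV - {0} \<subseteq> {t. poly (p - q) t = 0}" using assms by auto
  ultimately have "finite (UNIV - {0::complex})" using finite_subset by blast
  then show False using infinite_UNIV_char_0[where 'a=complex] by simp
qed

lemma coreB:
  fixes B G :: "complex mat"
  assumes B[simp]: "B \<in> carrier_mat m m" and G[simp]: "G \<in> carrier_mat m m"
    and BGB: "B * G * B = B" and GBG: "G * B * G = G" and BG: "B * G = G * B"
  shows "(\<Sum>\<beta>\<in>{\<beta>. \<beta> \<subseteq> {0..<m} \<and> card \<beta> = vec_space.rank m B}. det (mask m \<beta> B)) \<noteq> 0"
proof -
  let ?U = "{0..<m}"
  define r where "r = vec_space.rank m B"
  define P where "P = B * G"
  define E where "E = 1\<^sub>m m - P"
  define Q where "Q = E + B"
  have Pc[simp]: "P \<in> carrier_mat m m" unfolding P_def by (rule mult_carrier_mat[OF B G])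
  have Ec[simp]: "E \<in> carrier_mat m m" unfolding E_def by (simp add: minus_carrier_mat)
  have Qc[simp]: "Q \<in> carrier_mat m m" unfolding Q_def by simp
  have PP: "P * P = P" unfolding P_def using BGB assoc_mult_mat[OF Pc[unfolded P_def] B G, symmetric] by simp
  have PB: "P * B = B" unfolding P_def using BGB by simp
  have BP: "B * P = B" unfolding P_def using BGB BG assoc_mult_mat[OF B G B, symmetric] by simp
  have rm: "r \<le> m" unfolding r_def using vec_space.rank_le_nc[OF B] .
  have rP: "vec_space.rank m P = r"
  proof -
    have "vec_space.rank m B \<le> vec_space.rank m P" using rank_mult_left[OF Pc B] PB by simp
    moreover have "vec_space.rank m P \<le> vec_space.rank m B" using rank_mult_left[OF B G] unfolding P_def .
    ultimately show ?thesis unfolding r_def by simp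
  qed
  have PE: "P * E = 0\<^sub>m m m" unfolding E_def using PP
    by (simp add: right_mult_one_mat[OF Pc] mult_minus_distrib_mat[where nr=m and n=m and nc=m])
  have rE: "vec_space.rank m E \<le> m - r" using rank_sylvester[OF Pc Ec PE] rP by simp
  define X where "X \<beta> = det (mask m \<beta> P)" for \<beta>
  define Y where "Y \<beta> = det (mask m \<beta> E)" for \<beta>
  define c where "c \<beta> = det (mask m \<beta> B)" for \<beta>
  have X0: "\<And>\<beta>. \<beta> \<subseteq> ?U \<Longrightarrow> r < card \<beta> \<Longrightarrow> X \<beta> = 0"
    unfolding X_def using minor_vanish[OF Pc] rP by simp
  have Y0: "\<And>\<beta>. \<beta> \<subseteq> ?U \<Longrightarrow> m - r < card \<beta> \<Longrightarrow> Y \<beta> = 0"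
    unfolding Y_def using minor_vanish[OF Ec] rE by simp
  have c0: "\<And>\<beta>. \<beta> \<subseteq> ?U \<Longrightarrow> r < card \<beta> \<Longrightarrow> c \<beta> = 0"
    unfolding c_def r_def using minor_vanish[OF B] by simp
  have cardU: "\<And>\<beta>. \<beta> \<subseteq> ?U \<Longrightarrow> card (?U - \<beta>) = m - card \<beta>"
    by (simp add: card_Diff_subset finite_subset)
  define F where "F t = det (P + t \<cdot>\<^sub>m E)" for t
  have F1: "F t = (\<Sum>\<beta>\<in>Pow ?U. t ^ (m - card \<beta>) * ((1 - t) ^ card \<beta> * X \<beta>))" for t
  proof -
    have "P + t \<cdot>\<^sub>m E = (1 - t) \<cdot>\<^sub>m P + mat m m (\<lambda>(a,b). if a = b then (\<lambda>_. t) a else 0)"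
      unfolding E_def using carrier_matD[OF Pc] by (intro eq_matI) (auto simp: algebra_simps)
    then show ?thesis unfolding F_def X_def
      by (simp only:, subst det_add_diag[where d="\<lambda>_. t"]) (auto intro!: sum.cong simp: cardU det_mask_smult)
  qed
  have F2: "F t = (\<Sum>\<beta>\<in>Pow ?U. (t - 1) ^ card \<beta> * Y \<beta>)" for t
  proof -
    have "P + t \<cdot>\<^sub>m E = (t - 1) \<cdot>\<^sub>m E + mat m m (\<lambda>(a,b). if a = b then (\<lambda>_. 1) a else 0)"
      unfolding E_def using carrier_matD[OF Pc] by (intro eq_matI) (auto simp: algebra_simps)
    then show ?thesis unfolding F_def Y_def
      by (simp only:, subst det_add_diag[where d="\<lambda>_. 1"]) (auto intro!: sum.cong simp: det_mask_smult)
  qed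
  have F_1: "F 1 = 1"
  proof -
    have "P + 1 \<cdot>\<^sub>m E = 1\<^sub>m m" unfolding E_def using carrier_matD[OF Pc] by (intro eq_matI) auto
    then show ?thesis unfolding F_def by simp
  qed
  define Fp where "Fp = (\<Sum>\<beta>\<in>Pow ?U. Polynomial.smult (Y \<beta>) ([:-1,1:] ^ card \<beta>))"
  define F1p where "F1p = (\<Sum>\<beta>\<in>Pow ?U. Polynomial.smult (X \<beta>) ([:0,1:] ^ (r - card \<beta>) * [:1,-1:] ^ card \<beta>))"
  have polyFp: "poly Fp t = F t" for t
    unfolding Fp_def F2 poly_sum by (intro sum.cong) auto
  have degFp: "degree Fp \<le> m - r"
    unfolding Fp_def
  proof (rule degree_sum_le)
    fix \<beta> assume \<beta>: "\<beta> \<in> Pow ?U"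
    show "degree (Polynomial.smult (Y \<beta>) ([:-1,1:] ^ card \<beta>)) \<le> m - r"
    proof (cases "m - r < card \<beta>")
      case True then show ?thesis using Y0 \<beta> by simp
    next
      case False
      have "degree (Polynomial.smult (Y \<beta>) ([:-1,1:] ^ card \<beta>)) \<le> degree ([:-1,1:] ^ card \<beta> :: complex poly)"
        by (rule degree_smult_le)
      also have "\<dots> \<le> degree [:-1,1::complex:] * card \<beta>" by (rule degree_power_le)
      also have "\<dots> \<le> m - r" using False by simp
      finally show ?thesis .
    qed
  qed simp
  have FpF1p: "Fp = monom 1 (m - r) * F1p"
  proof (rule poly_eq_poly_eq_iff[THEN iffD1], rule ext)
    fix t
    have "poly Fp t = (\<Sum>\<beta>\<in>Pow ?U. t ^ (m - card \<beta>) * ((1 - t) ^ card \<beta> * X \<beta>))"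
      unfolding polyFp F1 ..
    also have "\<dots> = (\<Sum>\<beta>\<in>Pow ?U. t ^ (m - r) * (X \<beta> * (t ^ (r - card \<beta>) * (1 - t) ^ card \<beta>)))"
    proof (intro sum.cong refl)
      fix \<beta> assume \<beta>: "\<beta> \<in> Pow ?U"
      show "t ^ (m - card \<beta>) * ((1 - t) ^ card \<beta> * X \<beta>) = t ^ (m - r) * (X \<beta> * (t ^ (r - card \<beta>) * (1 - t) ^ card \<beta>))"
      proof (cases "r < card \<beta>")
        case True then show ?thesis using X0 \<beta> by simp
      next
        case False
        then have "m - card \<beta> = (m - r) + (r - card \<beta>)" using rm by simp
        then show ?thesis by (simp add: power_add algebra_simps)
      qed
    qed
    also have "\<dots> = poly (monom 1 (m - r) * F1p) t"
      unfolding F1p_def poly_mult poly_monom poly_sum sum_distrib_left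
      by (intro sum.cong refl) (simp add: algebra_simps)
    finally show "poly Fp t = poly (monom 1 (m - r) * F1p) t" .
  qed
  have Ft: "F t = t ^ (m - r)" for t
  proof -
    have F1p0: "F1p \<noteq> 0"
    proof
      assume "F1p = 0"
      then have "Fp = 0" unfolding FpF1p by simp
      then show False using polyFp[of 1] F_1 by simp
    qed
    have "degree Fp = (m - r) + degree F1p"
      unfolding FpF1p using F1p0 by (subst degree_mult_eq) (auto simp: degree_monom_eq)
    then have "degree F1p = 0" using degFp by simp
    then obtain a where a: "F1p = [:a:]" by (rule degree_eq_zeroE)
    have "a = 1" using polyFp[of 1] F_1 unfolding FpF1p a by (simp add: poly_monom)
    then show ?thesis using polyFp[of t] unfolding FpF1p a by (simp add: poly_monom)
  qed
  define Hp where "Hp = det (mat m m (\<lambda>(a,b). [:Q $$ (a,b), P $$ (a,b):]))"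
  have polyHp: "poly Hp t = det (Q + t \<cdot>\<^sub>m P)" for t
    unfolding Hp_def by (rule poly_det_cong[of _ m]) (use carrier_matD[OF Qc] carrier_matD[OF Pc] in auto)
  define Sp where "Sp = (\<Sum>\<beta>\<in>Pow ?U. monom (c \<beta>) (r - card \<beta>))"
  have main: "t ^ (m - r) * poly Sp t = t ^ (m - r) * poly Hp t" for t
  proof -
    have "t ^ (m - r) * poly Sp t = (\<Sum>\<beta>\<in>Pow ?U. t ^ (m - card \<beta>) * c \<beta>)"
      unfolding Sp_def poly_sum sum_distrib_left
    proof (intro sum.cong refl)
      fix \<beta> assume \<beta>: "\<beta> \<in> Pow ?U"
      show "t ^ (m - r) * poly (monom (c \<beta>) (r - card \<beta>)) t = t ^ (m - card \<beta>) * c \<beta>"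
      proof (cases "r < card \<beta>")
        case True then show ?thesis using c0 \<beta> by (simp add: poly_monom)
      next
        case False
        then have "m - card \<beta> = (m - r) + (r - card \<beta>)" using rm by simp
        then show ?thesis by (simp add: power_add poly_monom algebra_simps)
      qed
    qed
    also have "\<dots> = det (B + mat m m (\<lambda>(a,b). if a = b then (\<lambda>_. t) a else 0))"
      unfolding c_def by (subst det_add_diag[where d="\<lambda>_. t"]) (auto intro!: sum.cong simp: cardU)
    also have "B + mat m m (\<lambda>(a,b). if a = b then (\<lambda>_. t) a else 0) = t \<cdot>\<^sub>m 1\<^sub>m m + B"
      using carrier_matD[OF B] by (intro eq_matI) auto
    also have "\<dots> = (P + t \<cdot>\<^sub>m E) * (Q + t \<cdot>\<^sub>m P)"
      unfolding Q_def by (rule factor_lemma[OF B Pc E_def PP PB BP, symmetric])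
    also have "det \<dots> = F t * det (Q + t \<cdot>\<^sub>m P)" unfolding F_def by (rule det_mult[of _ m]) auto
    also have "\<dots> = t ^ (m - r) * poly Hp t" unfolding Ft polyHp ..
    finally show ?thesis .
  qed
  have SH: "Sp = Hp"
  proof (rule poly_eq_nonzero)
    fix t :: complex assume "t \<noteq> 0"
    then show "poly Sp t = poly Hp t" using main[of t] by simp
  qed
  have "poly Sp 0 = (\<Sum>\<beta>\<in>{\<beta>. \<beta> \<subseteq> ?U \<and> card \<beta> = r}. c \<beta>)"
  proof -
    have "poly Sp 0 = (\<Sum>\<beta>\<in>Pow ?U. if card \<beta> = r then c \<beta> else 0)"
      unfolding Sp_def poly_sum
    proof (intro sum.cong refl)
      fix \<beta> assume \<beta>: "\<beta> \<in> Pow ?U"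
      show "poly (monom (c \<beta>) (r - card \<beta>)) 0 = (if card \<beta> = r then c \<beta> else 0)"
        using c0[of \<beta>] \<beta> by (cases "r < card \<beta>") (auto simp: poly_monom)
    qed
    also have "\<dots> = (\<Sum>\<beta>\<in>{\<beta>. \<beta> \<subseteq> ?U \<and> card \<beta> = r}. c \<beta>)"
      by (subst sum.inter_filter[symmetric]) (auto intro!: sum.cong)
    finally show ?thesis .
  qed
  moreover have "poly Hp 0 = det Q"
  proof -
    have "Q + 0 \<cdot>\<^sub>m P = Q" using carrier_matD[OF Qc] carrier_matD[OF Pc] by (intro eq_matI) auto
    then show ?thesis unfolding polyHp by simp
  qed
  moreover have "det Q \<noteq> 0"
  proof -
    have "det Q * det (E + G) = 1"
      using inverse_lemma[OF B G P_def E_def BGB GBG BG] det_mult[of Q m "E + G"] unfolding Q_def by simp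
    then show ?thesis by auto
  qed
  ultimately show ?thesis unfolding SH c_def r_def by simp
qed


lemma pow_Suc_left:
  fixes A :: "'a :: semiring_1 mat"
  assumes A: "A \<in> carrier_mat n n"
  shows "A ^\<^sub>m Suc k = A * A ^\<^sub>m k"
proof (induct k)
  case 0 then show ?case using A by simp
next
  case (Suc k)
  have "A ^\<^sub>m Suc (Suc k) = (A * A ^\<^sub>m k) * A" using Suc by simp
  also have "\<dots> = A * (A ^\<^sub>m k * A)" by (rule assoc_mult_mat[OF A pow_carrier_mat[OF A] A])
  finally show ?case by simp
qed

lemma pow_add_mat:
  fixes A :: "'a :: semiring_1 mat"
  assumes A: "A \<in> carrier_mat n n"
  shows "A ^\<^sub>m (a + b) = A ^\<^sub>m a * A ^\<^sub>m b"
proof (induct b)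
  case 0 then show ?case using A by simp
next
  case (Suc b)
  have "A ^\<^sub>m (a + Suc b) = (A ^\<^sub>m a * A ^\<^sub>m b) * A" using Suc by simp
  also have "\<dots> = A ^\<^sub>m a * (A ^\<^sub>m b * A)" by (rule assoc_mult_mat[OF pow_carrier_mat[OF A] pow_carrier_mat[OF A] A])
  finally show ?case by simp
qed

lemma intertwine_pow:
  fixes Y M N :: "'a :: semiring_1 mat"
  assumes Y: "Y \<in> carrier_mat a b" and M: "M \<in> carrier_mat a a" and N: "N \<in> carrier_mat b b"
    and YN: "Y * N = M * Y"
  shows "Y * N ^\<^sub>m j = M ^\<^sub>m j * Y"
proof (induct j)
  case 0 then show ?case using Y M N by (simp add: carrier_matD)
next
  case (Suc j)
  have "Y * N ^\<^sub>m Suc j = Y * (N ^\<^sub>m j * N)" by simp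
  also have "\<dots> = (Y * N ^\<^sub>m j) * N" by (rule assoc_mult_mat[OF Y pow_carrier_mat[OF N] N, symmetric])
  also have "\<dots> = (M ^\<^sub>m j * Y) * N" unfolding Suc ..
  also have "\<dots> = M ^\<^sub>m j * (Y * N)" by (rule assoc_mult_mat[OF pow_carrier_mat[OF M] Y N])
  also have "\<dots> = M ^\<^sub>m j * (M * Y)" unfolding YN ..
  also have "\<dots> = (M ^\<^sub>m j * M) * Y" by (rule assoc_mult_mat[OF pow_carrier_mat[OF M] M Y, symmetric])
  finally show ?case by simp
qed

lemma commute_pow:
  fixes M D :: "'a :: semiring_1 mat"
  assumes M: "M \<in> carrier_mat n n" and D: "D \<in> carrier_mat n n" and MD: "M * D = D * M"
  shows "M ^\<^sub>m j * D = D * M ^\<^sub>m j"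
  using intertwine_pow[OF D M M MD[symmetric]] by simp

lemma commute_pow2:
  fixes M D :: "'a :: semiring_1 mat"
  assumes M: "M \<in> carrier_mat n n" and D: "D \<in> carrier_mat n n" and MD: "M * D = D * M"
  shows "M ^\<^sub>m i * D ^\<^sub>m j = D ^\<^sub>m j * M ^\<^sub>m i"
  using intertwine_pow[OF pow_carrier_mat[OF M] D D commute_pow[OF M D MD]] by simp

lemma mult_pow_commute:
  fixes M D :: "'a :: semiring_1 mat"
  assumes M: "M \<in> carrier_mat n n" and D: "D \<in> carrier_mat n n" and MD: "M * D = D * M"
  shows "(M * D) ^\<^sub>m j = M ^\<^sub>m j * D ^\<^sub>m j"
proof (induct j)
  case 0 then show ?case using M D by (simp add: carrier_matD)
next
  case (Suc j)
  have Mj: "M ^\<^sub>m j \<in> carrier_mat n n" and Dj: "D ^\<^sub>m j \<in> carrier_mat n n" using M D by auto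
  have "(M * D) ^\<^sub>m Suc j = (M ^\<^sub>m j * D ^\<^sub>m j) * (M * D)" using Suc by simp
  also have "\<dots> = M ^\<^sub>m j * (D ^\<^sub>m j * (M * D))" by (rule assoc_mult_mat[OF Mj Dj mult_carrier_mat[OF M D]])
  also have "D ^\<^sub>m j * (M * D) = (D ^\<^sub>m j * M) * D" by (rule assoc_mult_mat[OF Dj M D, symmetric])
  also have "D ^\<^sub>m j * M = M * D ^\<^sub>m j" using commute_pow[OF D M MD[symmetric]] by simp
  also have "(M * D ^\<^sub>m j) * D = M * (D ^\<^sub>m j * D)" by (rule assoc_mult_mat[OF M Dj D])
  also have "M ^\<^sub>m j * (M * (D ^\<^sub>m j * D)) = (M ^\<^sub>m j * M) * (D ^\<^sub>m j * D)"
    by (rule assoc_mult_mat[OF Mj M mult_carrier_mat[OF Dj D], symmetric])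
  finally show ?case by simp
qed

lemma idem_pow:
  fixes P :: "'a :: semiring_1 mat"
  assumes P: "P \<in> carrier_mat n n" and PP: "P * P = P"
  shows "P ^\<^sub>m Suc j = P"
proof (induct j)
  case 0 then show ?case using P by simp
next
  case (Suc j)
  then show ?case using PP by simp
qed

lemma group_inv_from_drazin:
  fixes M D :: "'a :: semiring_1 mat"
  assumes M: "M \<in> carrier_mat n n" and D: "D \<in> carrier_mat n n" and MD: "M * D = D * M"
    and DMD: "D * M * D = D" and MDM: "M * D * M ^\<^sub>m Suc s = M ^\<^sub>m Suc s"
  shows "M ^\<^sub>m Suc s * D ^\<^sub>m Suc s = M * D"
    and "D ^\<^sub>m Suc s * M ^\<^sub>m Suc s = M * D"
    and "M ^\<^sub>m Suc s * D ^\<^sub>m Suc s * M ^\<^sub>m Suc s = M ^\<^sub>m Suc s"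
    and "D ^\<^sub>m Suc s * M ^\<^sub>m Suc s * D ^\<^sub>m Suc s = D ^\<^sub>m Suc s"
proof -
  have PP: "M * D * (M * D) = M * D"
  proof -
    have "M * D * (M * D) = M * (D * M * D)" using M D by (simp add: assoc_mult_mat[of _ n n _ n _ n])
    then show ?thesis using DMD by simp
  qed
  have BG: "M ^\<^sub>m Suc s * D ^\<^sub>m Suc s = M * D"
    using mult_pow_commute[OF M D MD, of "Suc s"] idem_pow[OF mult_carrier_mat[OF M D] PP, of s] by (simp del: pow_mat.simps)
  show 1: "M ^\<^sub>m Suc s * D ^\<^sub>m Suc s = M * D" by (rule BG)
  show 2: "D ^\<^sub>m Suc s * M ^\<^sub>m Suc s = M * D"
    using BG commute_pow2[OF M D MD, of "Suc s" "Suc s"] by (simp del: pow_mat.simps)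
  show "M ^\<^sub>m Suc s * D ^\<^sub>m Suc s * M ^\<^sub>m Suc s = M ^\<^sub>m Suc s" unfolding BG by (rule MDM)
  have "D ^\<^sub>m Suc s * M ^\<^sub>m Suc s * D ^\<^sub>m Suc s = M * D * D ^\<^sub>m Suc s" unfolding 2 ..
  also have "\<dots> = D * M * D * D ^\<^sub>m s"
  proof -
    have "M * D * D ^\<^sub>m Suc s = M * D * (D * D ^\<^sub>m s)" using pow_Suc_left[OF D] by simp
    also have "\<dots> = (M * D * D) * D ^\<^sub>m s" using M D by (simp add: assoc_mult_mat[of _ n n _ n _ n])
    also have "M * D * D = D * M * D" using MD by simp
    finally show ?thesis .
  qed
  also have "\<dots> = D ^\<^sub>m Suc s" unfolding DMD using pow_Suc_left[OF D] by simp
  finally show "D ^\<^sub>m Suc s * M ^\<^sub>m Suc s * D ^\<^sub>m Suc s = D ^\<^sub>m Suc s" .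
qed


lemma mask_transpose:
  assumes C: "C \<in> carrier_mat m m"
  shows "mask m \<beta> (transpose_mat C) = transpose_mat (mask m \<beta> C)"
  using C by (intro eq_matI) (auto simp: mask_def)

lemma det_mask_transpose:
  assumes C: "C \<in> carrier_mat m m"
  shows "det (mask m \<beta> (transpose_mat C)) = det (mask m \<beta> C)"
  unfolding mask_transpose[OF C] by (rule det_transpose[OF mask_carrier])

lemma replace_row_transpose:
  assumes Z: "Z \<in> carrier_mat n n"
  shows "replace_row Z j u = transpose_mat (replace_col (transpose_mat Z) j u)"
  using Z by (intro eq_matI) (auto simp: replace_row_def replace_col_def)

lemma replace_col_mult:
  fixes B :: "complex mat"
  assumes B: "B \<in> carrier_mat m m" and z: "z \<in> carrier_vec m" and i: "i < m"
  shows "replace_col B i (B *\<^sub>v z) = B * replace_col (1\<^sub>m m) i z"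
proof (rule eq_matI)
  fix a b assume a: "a < dim_row (B * replace_col (1\<^sub>m m) i z)" and b: "b < dim_col (B * replace_col (1\<^sub>m m) i z)"
  have a': "a < m" and b': "b < m" using a b B by (auto simp: replace_col_def)
  have col: "col (replace_col (1\<^sub>m m) i z) b = (if b = i then z else unit_vec m b)"
    using b' z by (intro eq_vecI) (auto simp: replace_col_def unit_vec_def)
  show "replace_col B i (B *\<^sub>v z) $$ (a, b) = (B * replace_col (1\<^sub>m m) i z) $$ (a, b)"
    using a' b' B z col by (auto simp: replace_col_def)
qed (use B in \<open>auto simp: replace_col_def\<close>)

lemma row_mult_transpose:
  fixes A B :: "'a :: comm_semiring_0 mat"
  assumes A: "A \<in> carrier_mat a b" and B: "B \<in> carrier_mat b c" and i: "i < a"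
  shows "row (A * B) i = transpose_mat B *\<^sub>v row A i"
  using A B i by (intro eq_vecI) (auto simp: row_mult comm_scalar_prod[of _ b])


lemma pow_plus1: "A ^\<^sub>m (j+1) = A ^\<^sub>m j * A" by simp
lemma pow_plus2: "A ^\<^sub>m (j+2) = A ^\<^sub>m (j+1) * A" by (simp add: numeral_2_eq_2)
lemma pow_Suc_plus: "A ^\<^sub>m Suc (j+1) = A ^\<^sub>m (j+2)" by (simp add: numeral_2_eq_2)

declare pow_mat.simps(2)[simp del]

lemma mside:
  fixes A W X :: "complex mat"
  assumes A: "A \<in> carrier_mat m n" and W: "W \<in> carrier_mat n m" and Xc: "X \<in> carrier_mat m n"
    and H1: "(A * W) ^\<^sub>m (k+1) * X * W = (A * W) ^\<^sub>m k" and H2: "X * W * A * W * X = X"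
    and H3: "A * W * X = X * W * A"
  defines "M \<equiv> A * W" and "D \<equiv> X * W"
  shows "M ^\<^sub>m (k+2) * D ^\<^sub>m (k+2) * M ^\<^sub>m (k+2) = M ^\<^sub>m (k+2)"
    and "D ^\<^sub>m (k+2) * M ^\<^sub>m (k+2) * D ^\<^sub>m (k+2) = D ^\<^sub>m (k+2)"
    and "M ^\<^sub>m (k+2) * D ^\<^sub>m (k+2) = D ^\<^sub>m (k+2) * M ^\<^sub>m (k+2)"
    and "M ^\<^sub>m (k+2) * (D ^\<^sub>m (k+2) * X) = X"
    and "M ^\<^sub>m (k+2) * X = M ^\<^sub>m k * A"
    and "M ^\<^sub>m (k+2) * D = M ^\<^sub>m (k+1)"
    and "M ^\<^sub>m k = M ^\<^sub>m (k+2) * (D * D)"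
    and "M ^\<^sub>m (k+2) = M ^\<^sub>m k * (M * M)"
proof -
  have Mc: "M \<in> carrier_mat m m" unfolding M_def using A W by simp
  have Dc: "D \<in> carrier_mat m m" unfolding D_def using Xc W by simp
  have AWc: "A * W \<in> carrier_mat m m" using A W by simp
  have XWc: "X * W \<in> carrier_mat m m" using Xc W by simp
  have XWAc: "X * W * A \<in> carrier_mat m n" using Xc W A by simp
  have MD: "M * D = D * M"
  proof -
    have "M * D = (A * W * X) * W" unfolding M_def D_def by (rule assoc_mult_mat[OF AWc Xc W, symmetric])
    also have "\<dots> = (X * W * A) * W" unfolding H3 ..
    also have "\<dots> = D * M" unfolding M_def D_def by (rule assoc_mult_mat[OF XWc A W])
    finally show ?thesis .
  qed
  have DMD: "D * M * D = D"
  proof -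
    have "D * M = X * W * A * W" unfolding M_def D_def by (rule assoc_mult_mat[OF XWc A W, symmetric])
    then have "D * M * D = (X * W * A * W) * (X * W)" unfolding D_def by simp
    also have "\<dots> = (X * W * A * W * X) * W"
      by (rule assoc_mult_mat[OF mult_carrier_mat[OF XWAc W] Xc W, symmetric])
    also have "\<dots> = D" unfolding H2 D_def ..
    finally show ?thesis .
  qed
  have H1': "M ^\<^sub>m (k+1) * D = M ^\<^sub>m k"
    using H1 assoc_mult_mat[OF pow_carrier_mat[OF Mc, of "k+1"] Xc W] unfolding M_def D_def by (simp del: pow_mat.simps)
  have BD: "M ^\<^sub>m (k+2) * D = M ^\<^sub>m (k+1)"
  proof -
    have "M ^\<^sub>m (k+2) = M * M ^\<^sub>m (k+1)" using pow_Suc_left[OF Mc, of "k+1"] by (simp only: pow_Suc_plus)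
    then have "M ^\<^sub>m (k+2) * D = M * (M ^\<^sub>m (k+1) * D)"
      using assoc_mult_mat[OF Mc pow_carrier_mat[OF Mc] Dc] by simp
    also have "\<dots> = M * M ^\<^sub>m k" unfolding H1' ..
    also have "\<dots> = M ^\<^sub>m (k+1)" using pow_Suc_left[OF Mc, of k] by simp
    finally show ?thesis .
  qed
  show "M ^\<^sub>m (k+2) * D = M ^\<^sub>m (k+1)" by (rule BD)
  have MDM: "M * D * M ^\<^sub>m Suc (k+1) = M ^\<^sub>m Suc (k+1)"
  proof -
    have "M * D * M ^\<^sub>m Suc (k+1) = M * (D * M ^\<^sub>m Suc (k+1))"
      by (rule assoc_mult_mat[OF Mc Dc pow_carrier_mat[OF Mc]])
    also have "D * M ^\<^sub>m Suc (k+1) = M ^\<^sub>m (k+2) * D" using commute_pow[OF Mc Dc MD, of "k+2"] by simp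
    also have "\<dots> = M ^\<^sub>m (k+1)" by (rule BD)
    also have "M * M ^\<^sub>m (k+1) = M ^\<^sub>m Suc (k+1)" using pow_Suc_left[OF Mc, of "k+1"] by simp
    finally show ?thesis .
  qed
  note g = group_inv_from_drazin[OF Mc Dc MD DMD MDM]
  have s2: "Suc (k+1) = k+2" by simp
  note pSuc = pow_Suc_left[OF Mc]
  show "M ^\<^sub>m (k+2) * D ^\<^sub>m (k+2) * M ^\<^sub>m (k+2) = M ^\<^sub>m (k+2)" using g(3) unfolding s2 .
  show "D ^\<^sub>m (k+2) * M ^\<^sub>m (k+2) * D ^\<^sub>m (k+2) = D ^\<^sub>m (k+2)" using g(4) unfolding s2 .
  show "M ^\<^sub>m (k+2) * D ^\<^sub>m (k+2) = D ^\<^sub>m (k+2) * M ^\<^sub>m (k+2)" using g(1,2) unfolding s2 by simp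
  have PX: "M * D * X = X"
  proof -
    have "M * D * X = (D * M) * X" unfolding MD ..
    also have "D * M = X * W * A * W" unfolding M_def D_def by (rule assoc_mult_mat[OF XWc A W, symmetric])
    finally show ?thesis using H2 by simp
  qed
  show "M ^\<^sub>m (k+2) * (D ^\<^sub>m (k+2) * X) = X"
    using assoc_mult_mat[OF pow_carrier_mat[OF Mc] pow_carrier_mat[OF Dc] Xc, of "k+2" "k+2"] g(1) PX
    unfolding s2 by simp
  show "M ^\<^sub>m (k+2) * X = M ^\<^sub>m k * A"
  proof -
    have "M ^\<^sub>m (k+2) * X = (M ^\<^sub>m (k+1) * M) * X" by (simp only: pow_plus2)
    also have "\<dots> = M ^\<^sub>m (k+1) * (M * X)" by (rule assoc_mult_mat[OF pow_carrier_mat[OF Mc] Mc Xc])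
    also have "M * X = D * A" unfolding M_def D_def H3 ..
    also have "M ^\<^sub>m (k+1) * (D * A) = (M ^\<^sub>m (k+1) * D) * A"
      by (rule assoc_mult_mat[OF pow_carrier_mat[OF Mc] Dc A, symmetric])
    also have "\<dots> = M ^\<^sub>m k * A" unfolding H1' ..
    finally show ?thesis .
  qed
  show "M ^\<^sub>m k = M ^\<^sub>m (k+2) * (D * D)"
    using BD H1' assoc_mult_mat[OF pow_carrier_mat[OF Mc] Dc Dc, of "k+2"] by simp
  show "M ^\<^sub>m (k+2) = M ^\<^sub>m k * (M * M)"
  proof -
    have "M ^\<^sub>m 2 = M * M" using Mc by (simp add: numeral_2_eq_2 pow_mat.simps(2))
    then show ?thesis using pow_add_mat[OF Mc, of k 2] by simp
  qed
qed


lemma nside: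
  fixes A W X :: "complex mat"
  assumes A: "A \<in> carrier_mat m n" and W: "W \<in> carrier_mat n m" and Xc: "X \<in> carrier_mat m n"
    and H1: "(A * W) ^\<^sub>m (k+1) * X * W = (A * W) ^\<^sub>m k" and H2: "X * W * A * W * X = X"
    and H3: "A * W * X = X * W * A"
  defines "N \<equiv> W * A" and "D \<equiv> W * X"
  shows "N ^\<^sub>m (k+2) * D ^\<^sub>m (k+2) * N ^\<^sub>m (k+2) = N ^\<^sub>m (k+2)"
    and "D ^\<^sub>m (k+2) * N ^\<^sub>m (k+2) * D ^\<^sub>m (k+2) = D ^\<^sub>m (k+2)"
    and "N ^\<^sub>m (k+2) * D ^\<^sub>m (k+2) = D ^\<^sub>m (k+2) * N ^\<^sub>m (k+2)"
    and "X * D ^\<^sub>m (k+2) * N ^\<^sub>m (k+2) = X"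
    and "X * N ^\<^sub>m (k+2) = A * N ^\<^sub>m k"
    and "vec_space.rank n (N ^\<^sub>m (k+2)) = vec_space.rank m ((A * W) ^\<^sub>m k)"
proof -
  define M where "M = A * W"
  note ms = mside[OF A W Xc H1 H2 H3, folded M_def]
  have Mc: "M \<in> carrier_mat m m" unfolding M_def using A W by simp
  have Nc: "N \<in> carrier_mat n n" unfolding N_def using A W by simp
  have Dc: "D \<in> carrier_mat n n" unfolding D_def using Xc W by simp
  have XWc: "X * W \<in> carrier_mat m m" using Xc W by simp
  have XWAc: "X * W * A \<in> carrier_mat m n" using Xc W A by simp
  have WXc: "W * X \<in> carrier_mat n n" using Xc W by simp
  have ND1: "N * D = W * (X * W * A)"
  proof -
    have "N * D = W * (A * (W * X))" unfolding N_def D_def by (rule assoc_mult_mat[OF W A WXc])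
    also have "A * (W * X) = A * W * X" by (rule assoc_mult_mat[OF A W Xc, symmetric])
    finally show ?thesis unfolding H3 .
  qed
  have ND: "N * D = D * N"
  proof -
    have "D * N = W * (X * (W * A))" unfolding N_def D_def by (rule assoc_mult_mat[OF W Xc mult_carrier_mat[OF W A]])
    also have "X * (W * A) = X * W * A" by (rule assoc_mult_mat[OF Xc W A, symmetric])
    finally show ?thesis unfolding ND1 by simp
  qed
  have DND: "D * N * D = D"
  proof -
    have DN: "D * N = W * (X * W * A)" using ND ND1 by simp
    have "D * N * D = W * (X * W * A) * (W * X)" unfolding DN by (simp add: D_def)
    also have "\<dots> = W * ((X * W * A) * (W * X))" by (rule assoc_mult_mat[OF W XWAc WXc])
    also have "(X * W * A) * (W * X) = X * W * A * W * X" by (rule assoc_mult_mat[OF XWAc W Xc, symmetric])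
    finally show ?thesis unfolding H2 D_def .
  qed
  have XN: "X * N = M * X"
    unfolding N_def M_def H3 by (rule assoc_mult_mat[OF Xc W A, symmetric])
  have AN: "A * N = M * A"
    unfolding N_def M_def by (rule assoc_mult_mat[OF A W A, symmetric])
  note XNj = intertwine_pow[OF Xc Mc Nc XN]
  note ANj = intertwine_pow[OF A Mc Nc AN]
  have E1: "X * N ^\<^sub>m (k+2) = A * N ^\<^sub>m k"
    unfolding XNj ms(5) ANj ..
  show "X * N ^\<^sub>m (k+2) = A * N ^\<^sub>m k" by (rule E1)
  have ND2: "N * D = W * (M * X)" unfolding ND1 M_def H3 ..
  have MXc: "M * X \<in> carrier_mat m n" using Mc Xc by simp
  have MDM: "N * D * N ^\<^sub>m Suc (k+1) = N ^\<^sub>m Suc (k+1)"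
  proof -
    have "N * D * N ^\<^sub>m Suc (k+1) = W * ((M * X) * N ^\<^sub>m (k+2))"
      unfolding ND2 pow_Suc_plus by (rule assoc_mult_mat[OF W MXc pow_carrier_mat[OF Nc]])
    also have "(M * X) * N ^\<^sub>m (k+2) = M * (X * N ^\<^sub>m (k+2))" by (rule assoc_mult_mat[OF Mc Xc pow_carrier_mat[OF Nc]])
    also have "\<dots> = (M * A) * N ^\<^sub>m k" unfolding E1 by (rule assoc_mult_mat[OF Mc A pow_carrier_mat[OF Nc], symmetric])
    also have "\<dots> = A * (N * N ^\<^sub>m k)" unfolding AN[symmetric] by (rule assoc_mult_mat[OF A Nc pow_carrier_mat[OF Nc]])
    also have "N * N ^\<^sub>m k = N ^\<^sub>m (k+1)" using pow_Suc_left[OF Nc, of k] by simp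
    also have "W * (A * N ^\<^sub>m (k+1)) = (W * A) * N ^\<^sub>m (k+1)" by (rule assoc_mult_mat[OF W A pow_carrier_mat[OF Nc], symmetric])
    also have "\<dots> = N ^\<^sub>m Suc (k+1)" unfolding N_def[symmetric] using pow_Suc_left[OF Nc, of "k+1"] by simp
    finally show ?thesis .
  qed
  note g = group_inv_from_drazin[OF Nc Dc ND DND MDM]
  have s2: "Suc (k+1) = k+2" by simp
  show "N ^\<^sub>m (k+2) * D ^\<^sub>m (k+2) * N ^\<^sub>m (k+2) = N ^\<^sub>m (k+2)" using g(3) unfolding s2 .
  show "D ^\<^sub>m (k+2) * N ^\<^sub>m (k+2) * D ^\<^sub>m (k+2) = D ^\<^sub>m (k+2)" using g(4) unfolding s2 .
  show "N ^\<^sub>m (k+2) * D ^\<^sub>m (k+2) = D ^\<^sub>m (k+2) * N ^\<^sub>m (k+2)" using g(1,2) unfolding s2 by simp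
  have XP: "X * (N * D) = X"
  proof -
    have "X * (N * D) = (X * N) * D" by (rule assoc_mult_mat[OF Xc Nc Dc, symmetric])
    also have "\<dots> = (X * W * A) * (W * X)" unfolding XN M_def H3 D_def ..
    also have "\<dots> = X * W * A * W * X" by (rule assoc_mult_mat[OF XWAc W Xc, symmetric])
    finally show ?thesis unfolding H2 .
  qed
  show "X * D ^\<^sub>m (k+2) * N ^\<^sub>m (k+2) = X"
    using XP g(2) assoc_mult_mat[OF Xc pow_carrier_mat[OF Dc] pow_carrier_mat[OF Nc], of "k+2" "k+2"]
    unfolding s2 by simp
  have r1: "vec_space.rank n (N ^\<^sub>m (k+2)) \<le> vec_space.rank m (M ^\<^sub>m k)"
  proof -
    have "N ^\<^sub>m (k+2) = W * (A * N ^\<^sub>m (k+1))"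
      using pow_Suc_left[OF Nc, of "k+1"] assoc_mult_mat[OF W A pow_carrier_mat[OF Nc], of "k+1"]
      unfolding pow_Suc_plus N_def by simp
    also have "A * N ^\<^sub>m (k+1) = M ^\<^sub>m (k+1) * A" by (rule ANj)
    also have "M ^\<^sub>m (k+1) = M ^\<^sub>m k * M" by (rule pow_plus1)
    finally have eq: "N ^\<^sub>m (k+2) = W * (M ^\<^sub>m k * M * A)" .
    have "vec_space.rank n (W * (M ^\<^sub>m k * M * A)) \<le> vec_space.rank m (M ^\<^sub>m k * M * A)"
      by (rule rank_mult_right[OF W]) (use Mc A in auto)
    also have "\<dots> \<le> vec_space.rank m (M ^\<^sub>m k * M)" by (rule rank_mult_left) (use Mc A in auto)
    also have "\<dots> \<le> vec_space.rank m (M ^\<^sub>m k)" by (rule rank_mult_left) (use Mc in auto)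
    finally show ?thesis unfolding eq .
  qed
  have r2: "vec_space.rank m (M ^\<^sub>m k) \<le> vec_space.rank n (N ^\<^sub>m (k+2))"
  proof -
    have Dm: "X * W \<in> carrier_mat m m" by (rule XWc)
    have B3: "M ^\<^sub>m (k+2) = M ^\<^sub>m (k+3) * (X * W)"
    proof -
      have "M ^\<^sub>m (k+3) = M * M ^\<^sub>m (k+2)" using pow_Suc_left[OF Mc, of "k+2"] by (simp add: numeral_3_eq_3 numeral_2_eq_2)
      then have "M ^\<^sub>m (k+3) * (X * W) = M * (M ^\<^sub>m (k+2) * (X * W))"
        using assoc_mult_mat[OF Mc pow_carrier_mat[OF Mc] Dm] by simp
      also have "M ^\<^sub>m (k+2) * (X * W) = M ^\<^sub>m (k+1)" by (rule ms(6))
      also have "M * M ^\<^sub>m (k+1) = M ^\<^sub>m (k+2)" using pow_Suc_left[OF Mc, of "k+1"] by (simp add: pow_Suc_plus)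
      finally show ?thesis ..
    qed
    have M3: "M ^\<^sub>m (k+3) = A * N ^\<^sub>m (k+2) * W"
    proof -
      have "M ^\<^sub>m (k+3) = M ^\<^sub>m (k+2) * (A * W)" unfolding M_def[symmetric]
        by (simp add: numeral_3_eq_3 numeral_2_eq_2 pow_mat.simps(2))
      also have "\<dots> = (M ^\<^sub>m (k+2) * A) * W" by (rule assoc_mult_mat[OF pow_carrier_mat[OF Mc] A W, symmetric])
      also have "M ^\<^sub>m (k+2) * A = A * N ^\<^sub>m (k+2)" by (rule ANj[symmetric])
      finally show ?thesis .
    qed
    have "vec_space.rank m (M ^\<^sub>m k) \<le> vec_space.rank m (M ^\<^sub>m (k+2))"
      unfolding ms(7) by (rule rank_mult_left[OF pow_carrier_mat[OF Mc] mult_carrier_mat[OF Dm Dm]])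
    also have "\<dots> \<le> vec_space.rank m (M ^\<^sub>m (k+3))"
      unfolding B3 by (rule rank_mult_left) (use Mc Dm in auto)
    also have "\<dots> \<le> vec_space.rank m (A * N ^\<^sub>m (k+2))"
      unfolding M3 by (rule rank_mult_left) (use A Nc W in auto)
    also have "\<dots> \<le> vec_space.rank n (N ^\<^sub>m (k+2))"
      by (rule rank_mult_right[OF A]) (use Nc in auto)
    finally show ?thesis .
  qed
  show "vec_space.rank n (N ^\<^sub>m (k+2)) = vec_space.rank m ((A * W) ^\<^sub>m k)"
    using r1 r2 unfolding M_def by simp
qed


theorem theorem2p8:
  fixes A W X :: "complex mat" and m n k r :: nat
  assumes A: "A \<in> carrier_mat m n" and W: "W \<in> carrier_mat n m"
    and k: "k = max (mind (A * W)) (mind (W * A))"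
    and r: "r = mrank ((A * W) ^\<^sub>m k)"
    and X: "is_wdrazin A W X"
  shows "\<forall>i<m. \<forall>j<n.
     X $$ (i,j) =
       (\<Sum>\<beta>\<in>{\<beta>\<in>Lset r m. i \<in> \<beta>}.
          det (psub (replace_col ((A * W) ^\<^sub>m (k+2)) i (col ((A * W) ^\<^sub>m k * A) j)) \<beta>))
       / (\<Sum>\<beta>\<in>Lset r m. det (psub ((A * W) ^\<^sub>m (k+2)) \<beta>))
     \<and>
     X $$ (i,j) =
       (\<Sum>\<alpha>\<in>{\<alpha>\<in>Lset r n. j \<in> \<alpha>}.
          det (psub (replace_row ((W * A) ^\<^sub>m (k+2)) j (row (A * (W * A) ^\<^sub>m k) i)) \<alpha>))
       / (\<Sum>\<alpha>\<in>Lset r n. det (psub ((W * A) ^\<^sub>m (k+2)) \<alpha>))"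
proof (intro allI impI)
  fix i j assume i: "i < m" and j: "j < n"
  have dA: "dim_row A = m" "dim_col A = n" using A by auto
  from X[unfolded is_wdrazin_def Let_def k[symmetric] dA]
  have Xc: "X \<in> carrier_mat m n" and H1: "(A * W) ^\<^sub>m (k+1) * X * W = (A * W) ^\<^sub>m k"
    and H2: "X * W * A * W * X = X" and H3: "A * W * X = X * W * A" by auto
  note ms = mside[OF A W Xc H1 H2 H3]
  note ns = nside[OF A W Xc H1 H2 H3]
  have Mc: "A * W \<in> carrier_mat m m" using A W by simp
  have Nc: "W * A \<in> carrier_mat n n" using A W by simp
  have XWc: "X * W \<in> carrier_mat m m" using Xc W by simp
  have WXc: "W * X \<in> carrier_mat n n" using Xc W by simp
  define B where "B = (A * W) ^\<^sub>m (k+2)"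
  define G where "G = (X * W) ^\<^sub>m (k+2)"
  define B' where "B' = (W * A) ^\<^sub>m (k+2)"
  define G' where "G' = (W * X) ^\<^sub>m (k+2)"
  have Bc: "B \<in> carrier_mat m m" unfolding B_def using Mc by simp
  have Gc: "G \<in> carrier_mat m m" unfolding G_def using XWc by simp
  have B'c: "B' \<in> carrier_mat n n" unfolding B'_def using Nc by simp
  have G'c: "G' \<in> carrier_mat n n" unfolding G'_def using WXc by simp
  have rdef: "r = vec_space.rank m ((A * W) ^\<^sub>m k)" unfolding r mrank_def using Mc dA by simp
  have rB: "vec_space.rank m B = r"
  proof -
    have "vec_space.rank m ((A * W) ^\<^sub>m k) \<le> vec_space.rank m B"
      unfolding B_def by (subst ms(7)) (rule rank_mult_left[OF pow_carrier_mat[OF Mc] mult_carrier_mat[OF XWc XWc]])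
    moreover have "vec_space.rank m B \<le> vec_space.rank m ((A * W) ^\<^sub>m k)"
      unfolding B_def ms(8) by (rule rank_mult_left[OF pow_carrier_mat[OF Mc] mult_carrier_mat[OF Mc Mc]])
    ultimately show ?thesis unfolding rdef by simp
  qed
  have rB': "vec_space.rank n B' = r" unfolding B'_def ns(6) rdef ..
  have rm: "r \<le> m" using vec_space.rank_le_nc[OF Bc] rB by simp
  have rn: "r \<le> n" using vec_space.rank_le_nc[OF B'c] rB' by simp
  have L1: "Lset r m = {\<beta>. \<beta> \<subseteq> {0..<m} \<and> card \<beta> = r}" unfolding Lset_def ..
  have L1i: "{\<beta>\<in>Lset r m. i \<in> \<beta>} = {\<beta>. \<beta> \<subseteq> {0..<m} \<and> card \<beta> = r \<and> i \<in> \<beta>}" unfolding Lset_def by auto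
  have L2: "Lset r n = {\<beta>. \<beta> \<subseteq> {0..<n} \<and> card \<beta> = r}" unfolding Lset_def ..
  have L2j: "{\<beta>\<in>Lset r n. j \<in> \<beta>} = {\<beta>. \<beta> \<subseteq> {0..<n} \<and> card \<beta> = r \<and> j \<in> \<beta>}" unfolding Lset_def by auto
  define x where "x = col X j"
  define z where "z = col (G * X) j"
  have xc: "x \<in> carrier_vec m" unfolding x_def carrier_vec_def using Xc by auto
  have zc: "z \<in> carrier_vec m" unfolding z_def carrier_vec_def using Xc Gc by auto
  have xz: "x = B *\<^sub>v z"
  proof -
    have "x = col (B * (G * X)) j" unfolding x_def B_def G_def ms(4) ..
    also have "\<dots> = B *\<^sub>v z" unfolding z_def by (rule col_mult2[OF Bc mult_carrier_mat[OF Gc Xc] j])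
    finally show ?thesis .
  qed
  have Bx: "B *\<^sub>v x = col ((A * W) ^\<^sub>m k * A) j"
    unfolding x_def using col_mult2[OF Bc Xc j] ms(5) unfolding B_def by simp
  have van: "det (mask m \<beta> (replace_col B i x)) = 0"
    if \<beta>: "\<beta> \<subseteq> {0..<m}" "card \<beta> = Suc r" "i \<in> \<beta>" for \<beta>
  proof -
    define R where "R = replace_col (1\<^sub>m m) i z"
    have Rc: "R \<in> carrier_mat m m" unfolding R_def by simp
    have eq: "replace_col B i x = B * R" unfolding xz R_def by (rule replace_col_mult[OF Bc zc i])
    have "vec_space.rank m (B * R) \<le> r" using rank_mult_left[OF Bc Rc] rB by simp
    then show ?thesis unfolding eq using \<beta> by (intro minor_vanish[OF mult_carrier_mat[OF Bc Rc]]) auto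
  qed
  have cA: "(\<Sum>\<beta>\<in>{\<beta>. \<beta> \<subseteq> {0..<m} \<and> card \<beta> = r \<and> i \<in> \<beta>}. det (mask m \<beta> (replace_col B i (B *\<^sub>v x))))
     = x $ i * (\<Sum>\<beta>\<in>{\<beta>. \<beta> \<subseteq> {0..<m} \<and> card \<beta> = r}. det (mask m \<beta> B))"
    by (rule coreA[OF Bc xc i rm van])
  have den1: "(\<Sum>\<beta>\<in>{\<beta>. \<beta> \<subseteq> {0..<m} \<and> card \<beta> = r}. det (mask m \<beta> B)) \<noteq> 0"
    using coreB[OF Bc Gc ms(1,2,3)[folded B_def G_def]] rB by simp
  have num1: "(\<Sum>\<beta>\<in>{\<beta>\<in>Lset r m. i \<in> \<beta>}.
          det (psub (replace_col ((A * W) ^\<^sub>m (k+2)) i (col ((A * W) ^\<^sub>m k * A) j)) \<beta>))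
      = (\<Sum>\<beta>\<in>{\<beta>. \<beta> \<subseteq> {0..<m} \<and> card \<beta> = r \<and> i \<in> \<beta>}. det (mask m \<beta> (replace_col B i (B *\<^sub>v x))))"
    unfolding L1i Bx[symmetric] B_def[symmetric]
    by (intro sum.cong refl det_psub_mask) (auto intro: replace_col_carrier[OF Bc])
  have dn1: "(\<Sum>\<beta>\<in>Lset r m. det (psub ((A * W) ^\<^sub>m (k+2)) \<beta>))
      = (\<Sum>\<beta>\<in>{\<beta>. \<beta> \<subseteq> {0..<m} \<and> card \<beta> = r}. det (mask m \<beta> B))"
    unfolding L1 B_def[symmetric] by (intro sum.cong refl det_psub_mask[OF Bc]) auto
  have xi: "x $ i = X $$ (i, j)" unfolding x_def using Xc i j by simp
  have part1: "X $$ (i,j) =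
       (\<Sum>\<beta>\<in>{\<beta>\<in>Lset r m. i \<in> \<beta>}.
          det (psub (replace_col ((A * W) ^\<^sub>m (k+2)) i (col ((A * W) ^\<^sub>m k * A) j)) \<beta>))
       / (\<Sum>\<beta>\<in>Lset r m. det (psub ((A * W) ^\<^sub>m (k+2)) \<beta>))"
    unfolding num1 dn1 cA using den1 xi by simp
  define BT where "BT = transpose_mat B'"
  have BTc: "BT \<in> carrier_mat n n" unfolding BT_def using B'c by simp
  define y where "y = row X i"
  define z' where "z' = row (X * G') i"
  have yc: "y \<in> carrier_vec n" unfolding y_def carrier_vec_def using Xc by auto
  have z'c: "z' \<in> carrier_vec n" unfolding z'_def carrier_vec_def using Xc G'c by auto
  have yz: "y = BT *\<^sub>v z'"
  proof -
    have "y = row (X * G' * B') i" unfolding y_def G'_def B'_def ns(4) ..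
    also have "\<dots> = BT *\<^sub>v z'" unfolding z'_def BT_def
      by (rule row_mult_transpose[OF mult_carrier_mat[OF Xc G'c] B'c i])
    finally show ?thesis .
  qed
  have BTy: "BT *\<^sub>v y = row (A * (W * A) ^\<^sub>m k) i"
    unfolding y_def BT_def using row_mult_transpose[OF Xc B'c i] ns(5) unfolding B'_def by simp
  have van2: "det (mask n \<beta> (replace_col BT j y)) = 0"
    if \<beta>: "\<beta> \<subseteq> {0..<n}" "card \<beta> = Suc r" "j \<in> \<beta>" for \<beta>
  proof -
    define R where "R = replace_col (1\<^sub>m n) j z'"
    have Rc: "R \<in> carrier_mat n n" unfolding R_def by simp
    have eq: "replace_col BT j y = BT * R" unfolding yz R_def by (rule replace_col_mult[OF BTc z'c j])
    have eqT: "transpose_mat (BT * R) = transpose_mat R * B'"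
      unfolding BT_def using transpose_mult[OF _ Rc, of BT n] BTc unfolding BT_def by simp
    have RBc: "transpose_mat R * B' \<in> carrier_mat n n" using Rc B'c by simp
    have "vec_space.rank n (transpose_mat R * B') \<le> r"
    proof -
      have RTc: "transpose_mat R \<in> carrier_mat n n" using Rc by simp
      show ?thesis using rank_mult_right[OF RTc B'c] rB' by simp
    qed
    then have "det (mask n \<beta> (transpose_mat R * B')) = 0" using \<beta> by (intro minor_vanish[OF RBc]) auto
    then show ?thesis unfolding eq
      using det_mask_transpose[OF mult_carrier_mat[OF BTc Rc], of \<beta>] eqT by simp
  qed
  have cA2: "(\<Sum>\<beta>\<in>{\<beta>. \<beta> \<subseteq> {0..<n} \<and> card \<beta> = r \<and> j \<in> \<beta>}. det (mask n \<beta> (replace_col BT j (BT *\<^sub>v y))))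
     = y $ j * (\<Sum>\<beta>\<in>{\<beta>. \<beta> \<subseteq> {0..<n} \<and> card \<beta> = r}. det (mask n \<beta> BT))"
    by (rule coreA[OF BTc yc j rn van2])
  have den2: "(\<Sum>\<beta>\<in>{\<beta>. \<beta> \<subseteq> {0..<n} \<and> card \<beta> = r}. det (mask n \<beta> B')) \<noteq> 0"
    using coreB[OF B'c G'c ns(1,2,3)[folded B'_def G'_def]] rB' by simp
  have dnT: "(\<Sum>\<beta>\<in>{\<beta>. \<beta> \<subseteq> {0..<n} \<and> card \<beta> = r}. det (mask n \<beta> BT))
     = (\<Sum>\<beta>\<in>{\<beta>. \<beta> \<subseteq> {0..<n} \<and> card \<beta> = r}. det (mask n \<beta> B'))"
    unfolding BT_def by (intro sum.cong refl det_mask_transpose[OF B'c])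
  have num2: "(\<Sum>\<alpha>\<in>{\<alpha>\<in>Lset r n. j \<in> \<alpha>}.
          det (psub (replace_row ((W * A) ^\<^sub>m (k+2)) j (row (A * (W * A) ^\<^sub>m k) i)) \<alpha>))
      = (\<Sum>\<beta>\<in>{\<beta>. \<beta> \<subseteq> {0..<n} \<and> card \<beta> = r \<and> j \<in> \<beta>}. det (mask n \<beta> (replace_col BT j (BT *\<^sub>v y))))"
    unfolding L2j BTy B'_def[symmetric]
  proof (intro sum.cong refl)
    fix \<beta> assume \<beta>: "\<beta> \<in> {\<beta>. \<beta> \<subseteq> {0..<n} \<and> card \<beta> = r \<and> j \<in> \<beta>}"
    have RRc: "replace_row B' j (row (A * (W * A) ^\<^sub>m k) i) \<in> carrier_mat n n"
      using B'c by (simp add: replace_row_def)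
    have RCc: "replace_col BT j (row (A * (W * A) ^\<^sub>m k) i) \<in> carrier_mat n n" using BTc by simp
    have "det (psub (replace_row B' j (row (A * (W * A) ^\<^sub>m k) i)) \<beta>)
       = det (mask n \<beta> (replace_row B' j (row (A * (W * A) ^\<^sub>m k) i)))"
      using \<beta> by (intro det_psub_mask[OF RRc]) auto
    also have "\<dots> = det (mask n \<beta> (replace_col BT j (row (A * (W * A) ^\<^sub>m k) i)))"
      unfolding replace_row_transpose[OF B'c] BT_def[symmetric] by (rule det_mask_transpose[OF RCc])
    finally show "det (psub (replace_row B' j (row (A * (W * A) ^\<^sub>m k) i)) \<beta>)
       = det (mask n \<beta> (replace_col BT j (row (A * (W * A) ^\<^sub>m k) i)))" .
  qed
  have dn2: "(\<Sum>\<alpha>\<in>Lset r n. det (psub ((W * A) ^\<^sub>m (k+2)) \<alpha>))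
      = (\<Sum>\<beta>\<in>{\<beta>. \<beta> \<subseteq> {0..<n} \<and> card \<beta> = r}. det (mask n \<beta> B'))"
    unfolding L2 B'_def[symmetric] by (intro sum.cong refl det_psub_mask[OF B'c]) auto
  have yj: "y $ j = X $$ (i, j)" unfolding y_def using Xc i j by simp
  have part2: "X $$ (i,j) =
       (\<Sum>\<alpha>\<in>{\<alpha>\<in>Lset r n. j \<in> \<alpha>}.
          det (psub (replace_row ((W * A) ^\<^sub>m (k+2)) j (row (A * (W * A) ^\<^sub>m k) i)) \<alpha>))
       / (\<Sum>\<alpha>\<in>Lset r n. det (psub ((W * A) ^\<^sub>m (k+2)) \<alpha>))"
    unfolding num2 dn2 cA2 dnT using den2 yj by simp
  show "X $$ (i,j) =
       (\<Sum>\<beta>\<in>{\<beta>\<in>Lset r m. i \<in> \<beta>}.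
          det (psub (replace_col ((A * W) ^\<^sub>m (k+2)) i (col ((A * W) ^\<^sub>m k * A) j)) \<beta>))
       / (\<Sum>\<beta>\<in>Lset r m. det (psub ((A * W) ^\<^sub>m (k+2)) \<beta>))
     \<and>
     X $$ (i,j) =
       (\<Sum>\<alpha>\<in>{\<alpha>\<in>Lset r n. j \<in> \<alpha>}.
          det (psub (replace_row ((W * A) ^\<^sub>m (k+2)) j (row (A * (W * A) ^\<^sub>m k) i)) \<alpha>))
       / (\<Sum>\<alpha>\<in>Lset r n. det (psub ((W * A) ^\<^sub>m (k+2)) \<alpha>))"
    using part1 part2 by simp
qed


end
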